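(* For every $n\in\mathbb N$, the subfunctor $P^{\mathbf{FA}}\otimes\overline P^{\otimes n}$ of $P^{\mathbf{FA}}\otimes(P^{\mathbf{FA}})^{\otimes n}\cong P^{\mathbf{FA}}_{\mathbf{n+1}}$ is a direct summand, hence is projective in $\mathcal F(\mathbf{FA})$. Moreover there is an isomorphism $$P^{\mathbf{FA}}_{\mathbf{n+1}}\cong P^{\mathbf{FA}}\otimes(\overline P\oplus\overline\Bbbk)^{\otimes n}\cong\bigoplus_{k=0}^n\big(P^{\mathbf{FA}}\otimes\overline P^{\otimes k}\big)^{\oplus\binom nk}.$$
   Context: Let $\Bbbk$ be a field. $\mathbf{FA}$ denotes the category of finite sets and all maps, and $\mathbf{FI}$, $\mathbf{FS}$, $\mathbf{FB}$ its wide subcategories of injections, surjections and bijections respectively; $\mathbf n=\{1,\dots,n\}$ for $n\in\mathbb N$ ($\mathbf 0=\emptyset$), and $\mathfrak S_n$ is the symmetric group. For a category $\mathcal C$, $\Bbbk\mathcal C(X,Y)$ is the $\Bbbk$-vector space with basis $\mathcal C(X,Y)$. A $\Bbbk\mathbf{FA}$-module is a functor from $\mathbf{FA}$ to $\Bbbk$-vector spaces (these form the abelian category $\mathcal F(\mathbf{FA})$); $\otimes$ denotes the pointwise tensor product over $\Bbbk$, and $\hom_{\Bbbk\mathbf{FA}}$ denotes natural transformations. $P^{\mathbf{FA}}_{\mathbf n}:=\Bbbk\mathbf{FA}(\mathbf n,-)$, so $P^{\mathbf{FA}}_{\mathbf n}(X)\cong\Bbbk[X]^{\otimes n}$ (where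 $\Bbbk[X]$ has basis $\{[x]:x\in X\}$), with the right $\mathfrak S_n$-action by precomposition, equivalently place permutation of tensor factors; write $P^{\mathbf{FA}}:=P^{\mathbf{FA}}_{\mathbf 1}$. Let $\overline{\Bbbk}$ be the functor with value $\Bbbk$ on non-empty sets (all maps acting by the identity) and $0$ on $\emptyset$, and $\Bbbk_{\mathbf 0}$ the functor with value $\Bbbk$ on $\emptyset$ and $0$ on non-empty sets. $\overline P$ is the kernel of the surjection $P^{\mathbf{FA}}\to\overline\Bbbk$, $[x]\mapsto 1$; thus $\overline P(X)=\{\sum_x a_x[x]:\sum_x a_x=0\}$. For $n\ge1$, $\overline P^{\otimes n}$ is the $n$-fold pointwise tensor power, a subfunctor of $P^{\mathbf{FA}}_{\mathbf n}$ stable under the place-permutation right action of $\mathfrak S_n$; by convention $\overline P^{\otimes 0}:=\overline\Bbbk$. *)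

theory Defs
  imports Main
begin

text \<open>
  Skeletal model of FA: the object n is the finite set {0..<n}; a morphism
  m -> m' is represented by any f :: nat => nat with f i < m' for i < m
  (only its restriction to {0..<m} matters).  A kFA-module is modelled
  concretely: its value at m is a k-linear subspace of a function space
  'z => 'k (pointwise operations); every k-vector space embeds in such a
  space, so nothing is lost.
\<close>

definition famap :: "nat \<Rightarrow> nat \<Rightarrow> (nat \<Rightarrow> nat) \<Rightarrow> bool" where
  "famap m m' f \<longleftrightarrow> (\<forall>i<m. f i < m')"

definition subsp :: "('z \<Rightarrow> 'k::field) set \<Rightarrow> bool" where
  "subsp V \<longleftrightarrow> (\<lambda>_. 0) \<in> V \<and> (\<forall>u\<in>V. \<forall>v\<in>V. (\<lambda>z. u z + v z) \<in> V)
      \<and> (\<forall>c. \<forall>u\<in>V. (\<lambda>z. c * u z) \<in> V)"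

definition lin_on :: "('z \<Rightarrow> 'k::field) set \<Rightarrow> (('z \<Rightarrow> 'k) \<Rightarrow> ('y \<Rightarrow> 'k)) \<Rightarrow> bool" where
  "lin_on V T \<longleftrightarrow> (\<forall>u\<in>V. \<forall>v\<in>V. T (\<lambda>z. u z + v z) = (\<lambda>y. T u y + T v y))
      \<and> (\<forall>c. \<forall>u\<in>V. T (\<lambda>z. c * u z) = (\<lambda>y. c * T u y))"

type_synonym ('z,'k) fa_obj = "nat \<Rightarrow> ('z \<Rightarrow> 'k) set"
type_synonym ('z,'k) fa_act = "nat \<Rightarrow> nat \<Rightarrow> (nat \<Rightarrow> nat) \<Rightarrow> ('z \<Rightarrow> 'k) \<Rightarrow> ('z \<Rightarrow> 'k)"

definition fa_module :: "('z,'k::field) fa_obj \<Rightarrow> ('z,'k) fa_act \<Rightarrow> bool" where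
  "fa_module M A \<longleftrightarrow>
     (\<forall>m. subsp (M m)) \<and>
     (\<forall>m m' f. famap m m' f \<longrightarrow> lin_on (M m) (A m m' f) \<and> A m m' f ` M m \<subseteq> M m') \<and>
     (\<forall>m m' f g. famap m m' f \<longrightarrow> (\<forall>i<m. f i = g i) \<longrightarrow> (\<forall>v\<in>M m. A m m' f v = A m m' g v)) \<and>
     (\<forall>m. \<forall>v\<in>M m. A m m id v = v) \<and>
     (\<forall>m m' m'' f g. famap m m' f \<longrightarrow> famap m' m'' g \<longrightarrow>
        (\<forall>v\<in>M m. A m m'' (g \<circ> f) v = A m' m'' g (A m m' f v)))"

definition fa_nat :: "('z,'k::field) fa_obj \<Rightarrow> ('z,'k) fa_act \<Rightarrow> ('y,'k) fa_obj \<Rightarrow> ('y,'k) fa_act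
      \<Rightarrow> (nat \<Rightarrow> ('z \<Rightarrow> 'k) \<Rightarrow> ('y \<Rightarrow> 'k)) \<Rightarrow> bool" where
  "fa_nat M A N B \<eta> \<longleftrightarrow> (\<forall>m. lin_on (M m) (\<eta> m) \<and> \<eta> m ` M m \<subseteq> N m) \<and>
     (\<forall>m m' f. famap m m' f \<longrightarrow> (\<forall>v\<in>M m. \<eta> m' (A m m' f v) = B m m' f (\<eta> m v)))"

definition fa_isomorphic :: "('z,'k::field) fa_obj \<Rightarrow> ('z,'k) fa_act \<Rightarrow> ('y,'k) fa_obj \<Rightarrow> ('y,'k) fa_act \<Rightarrow> bool" where
  "fa_isomorphic M A N B \<longleftrightarrow> (\<exists>\<eta>. fa_nat M A N B \<eta> \<and> (\<forall>m. bij_betw (\<eta> m) (M m) (N m)))"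

text \<open>Projectivity in F(FA): lifting along epimorphisms (= pointwise surjective
  natural transformations) between arbitrary modules, here valued in 'a => 'k.\<close>
definition fa_projective :: "'a itself \<Rightarrow> ('z,'k::field) fa_obj \<Rightarrow> ('z,'k) fa_act \<Rightarrow> bool" where
  "fa_projective T M A \<longleftrightarrow>
     (\<forall>(G::('a,'k) fa_obj) AG (H::('a,'k) fa_obj) AH p \<phi>.
        fa_module G AG \<longrightarrow> fa_module H AH \<longrightarrow> fa_nat G AG H AH p \<longrightarrow> (\<forall>m. p m ` G m = H m) \<longrightarrow>
        fa_nat M A H AH \<phi> \<longrightarrow>
        (\<exists>\<psi>. fa_nat M A G AG \<psi> \<and> (\<forall>m. \<forall>v\<in>M m. p m (\<psi> m v) = \<phi> m v)))"

text \<open>Tensor powers of permutation modules as functions on tuples.\<close>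
definition tuples :: "'x set \<Rightarrow> nat \<Rightarrow> 'x list set" where
  "tuples D r = {xs. length xs = r \<and> set xs \<subseteq> D}"

text \<open>Linear extension of [x_1,...,x_r] |-> [g x_1,...,g x_r].\<close>
definition lpush :: "'x set \<Rightarrow> ('x \<Rightarrow> 'x) \<Rightarrow> ('x list \<Rightarrow> 'k::field) \<Rightarrow> ('x list \<Rightarrow> 'k)" where
  "lpush D g \<phi> = (\<lambda>ys. \<Sum>xs\<in>{xs \<in> tuples D (length ys). map g xs = ys}. \<phi> xs)"

text \<open>P^FA_r (m) = k[m]^{\<otimes> r}, as functions on r-tuples of elements of m.\<close>
definition PFA :: "nat \<Rightarrow> (nat list, 'k::field) fa_obj" where
  "PFA r m = {\<phi>. \<forall>xs. xs \<notin> tuples {..<m} r \<longrightarrow> \<phi> xs = 0}"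

definition PFA_act :: "(nat list, 'k::field) fa_act" where
  "PFA_act m m' f = lpush {..<m} f"

text \<open>The subfunctor P \<otimes> Pbar^{\<otimes> k} of P^FA_{k+1}: tensor factors 1..k lie in
  Pbar (coefficient sum zero), factor 0 is P.  For k = 0 this is P = P \<otimes> kbar.\<close>
definition PPbar :: "nat \<Rightarrow> (nat list, 'k::field) fa_obj" where
  "PPbar k m = {\<phi> \<in> PFA (Suc k) m. \<forall>i\<in>{1..k}. \<forall>xs\<in>tuples {..<m} (Suc k).
                  (\<Sum>x<m. \<phi> (xs[i := x])) = 0}"

text \<open>P \<otimes> (Pbar \<oplus> kbar)^{\<otimes> n}: Pbar \<oplus> kbar (m) is modelled on functions on
  nat option (Some x = basis [x], None = the kbar summand), with the Some-part summing
  to zero; the first tensor factor (P) only uses Some.\<close>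
definition optset :: "nat \<Rightarrow> nat option set" where
  "optset m = insert None (Some ` {..<m})"

definition PPbarKbar :: "nat \<Rightarrow> (nat option list, 'k::field) fa_obj" where
  "PPbarKbar n m = {\<Phi>. (\<forall>xs. xs \<notin> {xs \<in> tuples (optset m) (Suc n). hd xs \<noteq> None} \<longrightarrow> \<Phi> xs = 0) \<and>
      (\<forall>i\<in>{1..n}. \<forall>xs\<in>tuples (optset m) (Suc n). (\<Sum>x<m. \<Phi> (xs[i := Some x])) = 0)}"

definition PPbarKbar_act :: "(nat option list, 'k::field) fa_act" where
  "PPbarKbar_act m m' f = lpush (optset m) (map_option f)"

text \<open>\<Oplus>_{k=0}^n (P \<otimes> Pbar^{\<otimes> k})^{\<oplus> (n choose k)}, indexed by (k, copy j, tuple).\<close>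
definition DSum :: "nat \<Rightarrow> (nat \<times> nat \<times> nat list, 'k::field) fa_obj" where
  "DSum n m = {\<Phi>. (\<forall>k j xs. (n < k \<or> n choose k \<le> j) \<longrightarrow> \<Phi> (k, j, xs) = 0) \<and>
      (\<forall>k\<le>n. \<forall>j < n choose k. (\<lambda>xs. \<Phi> (k, j, xs)) \<in> PPbar k m)}"

definition DSum_act :: "(nat \<times> nat \<times> nat list, 'k::field) fa_act" where
  "DSum_act m m' f \<Phi> = (\<lambda>(k, j, ys). lpush {..<m} f (\<lambda>xs. \<Phi> (k, j, xs)) ys)"

end

theory Submission
  imports Defs
begin


lemma tuples_nth: "xs \<in> tuples D r \<longleftrightarrow> length xs = r \<and> (\<forall>k<length xs. xs!k \<in> D)"
  by (auto simp: tuples_def set_conv_nth)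

lemma finite_tuples: "finite D \<Longrightarrow> finite (tuples D r)"
  unfolding tuples_def using finite_lists_length_eq[of D r] by (simp add: conj_commute)

lemma tuples_update_swap:
  assumes "xs[i:=a] \<in> tuples D r" "b \<in> D" shows "xs[i:=b] \<in> tuples D r"
proof -
  have "\<And>k. k < length xs \<Longrightarrow> xs[i:=b]!k \<in> D"
  proof -
    fix k assume k: "k < length xs"
    show "xs[i:=b]!k \<in> D"
    proof (cases "k = i")
      case True then show ?thesis using assms(2) k by simp
    next
      case False then have "xs[i:=b]!k = xs[i:=a]!k" by simp
      then show ?thesis using assms(1) k unfolding tuples_nth by simp
    qed
  qed
  then show ?thesis using assms(1) unfolding tuples_nth by simp
qed

lemma lpush_add: "lpush D g (\<lambda>z. u z + v z) = (\<lambda>y. lpush D g u y + lpush D g v y)"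
  by (auto simp: lpush_def sum.distrib)

lemma lpush_smult: "lpush D g (\<lambda>z. c * u z) = (\<lambda>y. c * lpush D g u y)"
  by (auto simp: lpush_def sum_distrib_left)

lemma lin_on_lpush: "lin_on V (lpush D g)"
  by (simp add: lin_on_def lpush_add lpush_smult)

lemma lpush_zero: "lpush D g (\<lambda>_. 0) = (\<lambda>_. 0)"
  by (simp add: lpush_def)

lemma lpush_comp:
  assumes fin: "finite D" "finite D'" and gD: "g ` D \<subseteq> D'"
  shows "lpush D (h \<circ> g) \<phi> = lpush D' h (lpush D g \<phi>)"
proof
  fix ys
  let ?X = "{xs \<in> tuples D (length ys). map (h \<circ> g) xs = ys}"
  let ?Z = "{zs \<in> tuples D' (length ys). map h zs = ys}"
  have fX: "finite ?X" using finite_tuples[OF fin(1)] by auto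
  have fZ: "finite ?Z" using finite_tuples[OF fin(2)] by auto
  have im: "map g ` ?X \<subseteq> ?Z"
  proof
    fix zs assume "zs \<in> map g ` ?X"
    then obtain xs where xs: "xs \<in> ?X" "zs = map g xs" by blast
    then have "set zs \<subseteq> D'" using gD by (auto simp: tuples_def)
    then show "zs \<in> ?Z" using xs by (auto simp: tuples_def)
  qed
  have "lpush D' h (lpush D g \<phi>) ys = (\<Sum>zs\<in>?Z. \<Sum>xs\<in>{xs \<in> tuples D (length zs). map g xs = zs}. \<phi> xs)"
    by (simp add: lpush_def)
  also have "\<dots> = (\<Sum>zs\<in>?Z. \<Sum>xs\<in>{xs. xs \<in> ?X \<and> map g xs = zs}. \<phi> xs)"
  proof (rule sum.cong[OF refl])
    fix zs assume "zs \<in> ?Z"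
    then have z: "length zs = length ys" "map h zs = ys" by (auto simp: tuples_def)
    have "xs \<in> tuples D (length zs) \<and> map g xs = zs \<longleftrightarrow> xs \<in> ?X \<and> map g xs = zs" for xs
      using z by (auto simp del: map_map simp add: map_map[symmetric])
    then have "{xs \<in> tuples D (length zs). map g xs = zs} = {xs. xs \<in> ?X \<and> map g xs = zs}"
      by blast
    then show "(\<Sum>xs\<in>{xs \<in> tuples D (length zs). map g xs = zs}. \<phi> xs) = (\<Sum>xs\<in>{xs. xs \<in> ?X \<and> map g xs = zs}. \<phi> xs)"
      by simp
  qed
  also have "\<dots> = sum \<phi> ?X" by (rule sum.group[OF fX fZ im])
  finally show "lpush D (h \<circ> g) \<phi> ys = lpush D' h (lpush D g \<phi>) ys"
    by (simp add: lpush_def)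
qed

lemma lpush_id:
  assumes "\<forall>xs. xs \<notin> tuples D r \<longrightarrow> \<phi> xs = 0"
  shows "lpush D id \<phi> = \<phi>"
proof
  fix ys
  have "{xs \<in> tuples D (length ys). map id xs = ys} = (if ys \<in> tuples D (length ys) then {ys} else {})"
    by auto
  then show "lpush D id \<phi> ys = \<phi> ys" using assms by (auto simp: lpush_def tuples_def)
qed

lemma lpush_cong:
  assumes "\<forall>x\<in>D. g x = g' x" shows "lpush D g = lpush D g'"
proof -
  have "\<And>xs. set xs \<subseteq> D \<Longrightarrow> map g xs = map g' xs" using assms by (auto intro!: map_cong)
  then show ?thesis unfolding lpush_def tuples_def by (intro ext sum.cong) auto
qed

lemma lpush_support:
  assumes "\<forall>xs. xs \<notin> tuples D r \<longrightarrow> \<phi> xs = 0" "g ` D \<subseteq> D'" "ys \<notin> tuples D' r"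
  shows "lpush D g \<phi> ys = 0"
proof -
  have "\<phi> xs = 0" if "xs \<in> tuples D (length ys)" "ys = map g xs" for xs
  proof -
    have "xs \<notin> tuples D r" using that assms(2,3) by (auto simp: tuples_def)
    then show "\<phi> xs = 0" using assms(1) by blast
  qed
  then show ?thesis unfolding lpush_def by (intro sum.neutral) auto
qed

lemma famap_img: "famap m m' f \<Longrightarrow> f ` {..<m} \<subseteq> {..<m'}"
  by (auto simp: famap_def)

lemma fa_module_PFA: "fa_module (PFA r :: (nat list, 'k::field) fa_obj) PFA_act"
  unfolding fa_module_def
proof (intro conjI allI impI ballI)
  fix m show "subsp (PFA r m :: (nat list \<Rightarrow> 'k) set)" by (auto simp: subsp_def PFA_def)
next
  fix m m' f assume f: "famap m m' f"
  show "lin_on (PFA r m) (PFA_act m m' f :: (nat list \<Rightarrow> 'k) \<Rightarrow> _)"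
    by (simp add: PFA_act_def lin_on_lpush)
  show "PFA_act m m' f ` PFA r m \<subseteq> (PFA r m' :: (nat list \<Rightarrow> 'k) set)"
    using lpush_support[OF _ famap_img[OF f]] by (auto simp: PFA_act_def PFA_def)
next
  fix m m' f g v assume "famap m m' f" "\<forall>i<m. f i = g i"
  then show "PFA_act m m' f v = PFA_act m m' g v" unfolding PFA_act_def by (subst lpush_cong[of _ f g]) auto
next
  fix m and v :: "nat list \<Rightarrow> 'k" assume "v \<in> PFA r m"
  then show "PFA_act m m id v = v" by (simp add: PFA_act_def PFA_def lpush_id)
next
  fix m m' m'' f g and v :: "nat list \<Rightarrow> 'k" assume f: "famap m m' f" "famap m' m'' g"
  show "PFA_act m m'' (g \<circ> f) v = PFA_act m' m'' g (PFA_act m m' f v)"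
    unfolding PFA_act_def by (rule lpush_comp) (use famap_img[OF f(1)] in auto)
qed


lemma lin_add: "lin_on V T \<Longrightarrow> u \<in> V \<Longrightarrow> v \<in> V \<Longrightarrow> T (\<lambda>z. u z + v z) = (\<lambda>y. T u y + T v y)"
  by (simp add: lin_on_def)
lemma lin_smult: "lin_on V T \<Longrightarrow> u \<in> V \<Longrightarrow> T (\<lambda>z. c * u z) = (\<lambda>y. c * T u y)"
  by (simp add: lin_on_def)
lemma subsp_add: "subsp V \<Longrightarrow> u \<in> V \<Longrightarrow> v \<in> V \<Longrightarrow> (\<lambda>z. u z + v z) \<in> V"
  by (simp add: subsp_def)
lemma subsp_smult: "subsp V \<Longrightarrow> u \<in> V \<Longrightarrow> (\<lambda>z. c * u z) \<in> V"
  by (simp add: subsp_def)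
lemma subsp_zero: "subsp V \<Longrightarrow> (\<lambda>_. 0) \<in> V"
  by (simp add: subsp_def)

lemma fam_subsp: "fa_module M A \<Longrightarrow> subsp (M m)" by (simp add: fa_module_def)
lemma fam_lin: "fa_module M A \<Longrightarrow> famap m m' f \<Longrightarrow> lin_on (M m) (A m m' f)" by (simp add: fa_module_def)
lemma fam_img: "fa_module M A \<Longrightarrow> famap m m' f \<Longrightarrow> v \<in> M m \<Longrightarrow> A m m' f v \<in> M m'"
  unfolding fa_module_def by blast
lemma fam_cong: "fa_module M A \<Longrightarrow> famap m m' f \<Longrightarrow> (\<forall>i<m. f i = g i) \<Longrightarrow> v \<in> M m \<Longrightarrow> A m m' f v = A m m' g v"
  unfolding fa_module_def by blast
lemma fam_id: "fa_module M A \<Longrightarrow> v \<in> M m \<Longrightarrow> A m m id v = v"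
  unfolding fa_module_def by blast
lemma fam_comp: "fa_module M A \<Longrightarrow> famap m m' f \<Longrightarrow> famap m' m'' g \<Longrightarrow> v \<in> M m \<Longrightarrow> A m m'' (g \<circ> f) v = A m' m'' g (A m m' f v)"
  unfolding fa_module_def by blast
lemma fan_lin: "fa_nat M A N B \<eta> \<Longrightarrow> lin_on (M m) (\<eta> m)" by (simp add: fa_nat_def)
lemma fan_img: "fa_nat M A N B \<eta> \<Longrightarrow> v \<in> M m \<Longrightarrow> \<eta> m v \<in> N m" unfolding fa_nat_def by blast
lemma fan_nat: "fa_nat M A N B \<eta> \<Longrightarrow> famap m m' f \<Longrightarrow> v \<in> M m \<Longrightarrow> \<eta> m' (A m m' f v) = B m m' f (\<eta> m v)"
  unfolding fa_nat_def by blast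

lemma subsp_sum:
  assumes V: "subsp V" and fin: "finite S" and u: "\<forall>x\<in>S. u x \<in> V"
  shows "(\<lambda>z. \<Sum>x\<in>S. c x * u x z) \<in> V"
  using fin u
proof (induction S rule: finite_induct)
  case empty then show ?case using V by (simp add: subsp_def)
next
  case (insert a S)
  have 1: "(\<lambda>z. c a * u a z) \<in> V" using V insert by (simp add: subsp_def)
  have 2: "(\<lambda>z. \<Sum>x\<in>S. c x * u x z) \<in> V" using insert by simp
  show ?case using V 1 2 insert(1,2) unfolding subsp_def by (simp add: sum.insert)
qed

lemma lin_on_zero:
  assumes "lin_on V T" "subsp V" shows "T (\<lambda>_. 0) = (\<lambda>_. 0)"
proof -
  have z: "(\<lambda>_. 0) \<in> V" using assms(2) by (simp add: subsp_def)
  have h: "T (\<lambda>z. c * u z) = (\<lambda>y. c * T u y)" if "u \<in> V" for c u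
    using assms(1) that unfolding lin_on_def by blast
  show ?thesis using h[OF z, of 0] by simp
qed

lemma lin_on_sum:
  assumes T: "lin_on V T" and V: "subsp V" and fin: "finite S" and u: "\<forall>x\<in>S. u x \<in> V"
  shows "T (\<lambda>z. \<Sum>x\<in>S. c x * u x z) = (\<lambda>y. \<Sum>x\<in>S. c x * T (u x) y)"
  using fin u
proof (induction S rule: finite_induct)
  case empty then show ?case using lin_on_zero[OF T V] by simp
next
  case (insert a S)
  have 1: "(\<lambda>z. c a * u a z) \<in> V" using V insert by (simp add: subsp_def)
  have 2: "(\<lambda>z. \<Sum>x\<in>S. c x * u x z) \<in> V" using insert.prems subsp_sum[OF V insert.hyps(1)] by simp
  have "T (\<lambda>z. \<Sum>x\<in>insert a S. c x * u x z) = T (\<lambda>z. (\<lambda>z. c a * u a z) z + (\<lambda>z. \<Sum>x\<in>S. c x * u x z) z)"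
    using insert(1,2) by simp
  also have "\<dots> = (\<lambda>y. T (\<lambda>z. c a * u a z) y + T (\<lambda>z. \<Sum>x\<in>S. c x * u x z) y)"
    using lin_add[OF T 1 2] .
  also have "T (\<lambda>z. c a * u a z) = (\<lambda>y. c a * T (u a) y)" using T insert unfolding lin_on_def by blast
  finally show ?case using insert by simp
qed

lemma lin_on_mono: "lin_on V T \<Longrightarrow> W \<subseteq> V \<Longrightarrow> lin_on W T"
  unfolding lin_on_def by (meson subsetD)

lemma fa_nat_comp:
  assumes "fa_nat M A N B \<eta>" "fa_nat N B Q C \<theta>"
  shows "fa_nat M A Q C (\<lambda>m v. \<theta> m (\<eta> m v))"
  unfolding fa_nat_def
proof (intro conjI allI impI ballI)
  fix m
  have 1: "lin_on (M m) (\<eta> m)" "\<eta> m ` M m \<subseteq> N m" "lin_on (N m) (\<theta> m)" "\<theta> m ` N m \<subseteq> Q m"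
    using assms unfolding fa_nat_def by auto
  then show "lin_on (M m) (\<lambda>v. \<theta> m (\<eta> m v))"
    unfolding lin_on_def image_subset_iff by simp
  show "(\<lambda>v. \<theta> m (\<eta> m v)) ` M m \<subseteq> Q m" using 1 by auto
next
  fix m m' f v assume f: "famap m m' f" and v: "v \<in> M m"
  have "\<eta> m v \<in> N m" using assms(1) v unfolding fa_nat_def by auto
  then show "\<theta> m' (\<eta> m' (A m m' f v)) = C m m' f (\<theta> m (\<eta> m v))"
    using assms f v unfolding fa_nat_def by auto
qed

lemma fa_nat_restrict:
  assumes "fa_nat M A N B \<eta>" "\<forall>m. M' m \<subseteq> M m"
  shows "fa_nat M' A N B \<eta>"
  using assms lin_on_mono unfolding fa_nat_def by (metis (no_types, lifting) subset_iff image_subset_iff)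

lemma fa_iso_trans:
  assumes "fa_isomorphic M A N B" "fa_isomorphic N B Q C"
  shows "fa_isomorphic M A Q C"
proof -
  obtain \<eta> where e: "fa_nat M A N B \<eta>" "\<forall>m. bij_betw (\<eta> m) (M m) (N m)"
    using assms(1) unfolding fa_isomorphic_def by blast
  obtain \<theta> where t: "fa_nat N B Q C \<theta>" "\<forall>m. bij_betw (\<theta> m) (N m) (Q m)"
    using assms(2) unfolding fa_isomorphic_def by blast
  have "bij_betw (\<lambda>v. \<theta> m (\<eta> m v)) (M m) (Q m)" for m
    using bij_betw_trans[OF e(2)[rule_format, of m] t(2)[rule_format, of m]] by (simp add: comp_def)
  then show ?thesis unfolding fa_isomorphic_def
    by (intro exI[of _ "\<lambda>m v. \<theta> m (\<eta> m v)"] conjI fa_nat_comp[OF e(1) t(1)]) auto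
qed

lemma fa_module_sub:
  assumes M: "fa_module M A" and N: "\<And>m. subsp (N m)" "\<And>m. N m \<subseteq> M m"
    and cl: "\<And>m m' f v. famap m m' f \<Longrightarrow> v \<in> N m \<Longrightarrow> A m m' f v \<in> N m'"
  shows "fa_module N A"
proof -
  have a: "lin_on (N m) (A m m' f)" if "famap m m' f" for m m' f
    using lin_on_mono[OF fam_lin[OF M that] N(2)] .
  have b: "A m m' f ` N m \<subseteq> N m'" if "famap m m' f" for m m' f
    using cl[OF that] by blast
  have c: "A m m' f v = A m m' g v" if "famap m m' f" "\<forall>i<m. f i = g i" "v \<in> N m" for m m' f g v
    using fam_cong[OF M that(1,2)] N(2) that(3) by blast
  have d: "A m m id v = v" if "v \<in> N m" for m v
    using fam_id[OF M] N(2) that by blast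
  have e: "A m m'' (g \<circ> f) v = A m' m'' g (A m m' f v)" if "famap m m' f" "famap m' m'' g" "v \<in> N m" for m m' m'' f g v
    using fam_comp[OF M that(1,2)] N(2) that(3) by blast
  show ?thesis unfolding fa_module_def
    apply (intro conjI allI impI ballI)
    apply (rule N(1))
    apply (erule a)
    apply (erule b)
    apply (erule (2) c)
    apply (erule d)
    apply (erule (2) e)
    done
qed

definition delta :: "nat list \<Rightarrow> nat list \<Rightarrow> 'k::field" where
  "delta xs = (\<lambda>ys. if ys = xs then 1 else 0)"

lemma famap_nth: "xs \<in> tuples {..<m} r \<Longrightarrow> famap r m (nth xs)"
  by (auto simp: famap_def tuples_nth)

lemma lpush_delta:
  assumes "xs \<in> tuples {..<m} r"
  shows "lpush {..<r} (nth xs) (delta [0..<r]) = (delta xs :: nat list \<Rightarrow> 'k::field)"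
proof
  fix ys
  have l: "length xs = r" using assms by (simp add: tuples_def)
  let ?A = "{zs \<in> tuples {..<r} (length ys). map (nth xs) zs = ys}"
  have fA: "finite ?A" using finite_tuples[of "{..<r}"] by auto
  have "[0..<r] \<in> ?A \<longleftrightarrow> ys = xs"
    using l map_nth[of xs] by (auto simp: tuples_def)
  moreover have "lpush {..<r} (nth xs) (delta [0..<r]) ys = (\<Sum>zs\<in>?A. if zs = [0..<r] then (1::'k) else 0)"
    unfolding lpush_def delta_def by simp
  ultimately show "lpush {..<r} (nth xs) (delta [0..<r]) ys = (delta xs ys :: 'k)"
    using sum.delta[OF fA, of "[0..<r]" "\<lambda>_. (1::'k)"] by (simp add: delta_def)
qed


lemma delta_expand:
  assumes "v \<in> PFA r m"
  shows "v = (\<lambda>z. \<Sum>xs\<in>tuples {..<m} r. v xs * delta xs z)"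
proof
  fix z
  have fin: "finite (tuples {..<m} r)" by (rule finite_tuples) simp
  have "(\<Sum>xs\<in>tuples {..<m} r. v xs * delta xs z) = (\<Sum>xs\<in>tuples {..<m} r. if z = xs then v xs else 0)"
    by (rule sum.cong) (auto simp: delta_def)
  also have "\<dots> = (if z \<in> tuples {..<m} r then v z else 0)" by (simp add: sum.delta'[OF fin])
  also have "\<dots> = v z" using assms by (auto simp: PFA_def)
  finally show "v z = (\<Sum>xs\<in>tuples {..<m} r. v xs * delta xs z)" by simp
qed

lemma delta_PFA: "xs \<in> tuples {..<m} r \<Longrightarrow> delta xs \<in> PFA r m"
  by (auto simp: PFA_def delta_def)

lemma proj_PFA:
  fixes G :: "('a,'k::field) fa_obj" and H :: "('a,'k) fa_obj"
    and \<phi> :: "nat \<Rightarrow> (nat list \<Rightarrow> 'k) \<Rightarrow> ('a \<Rightarrow> 'k)"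
  assumes G: "fa_module G AG" and H: "fa_module H AH" and p: "fa_nat G AG H AH p"
    and surj: "\<forall>m. p m ` G m = H m" and phi: "fa_nat (PFA r) PFA_act H AH \<phi>"
  shows "\<exists>\<psi>. fa_nat (PFA r) PFA_act G AG \<psi> \<and> (\<forall>m. \<forall>v\<in>PFA r m. p m (\<psi> m v) = \<phi> m v)"
proof -
  define e :: "nat list \<Rightarrow> 'k" where "e = delta [0..<r]"
  have eP: "e \<in> PFA r r" unfolding e_def by (rule delta_PFA) (auto simp: tuples_def)
  have "\<phi> r e \<in> H r" using fan_img[OF phi eP] .
  then have "\<phi> r e \<in> p r ` G r" using surj by simp
  then obtain g where g: "g \<in> G r" "p r g = \<phi> r e" by (metis imageE)
  define T where "T m = (tuples {..<m} r :: nat list set)" for m :: nat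
  have finT: "finite (T m)" for m unfolding T_def by (rule finite_tuples) simp
  define \<psi> where "\<psi> m v = (\<lambda>a. \<Sum>xs\<in>T m. v xs * AG r m (nth xs) g a)" for m v
  have uG: "AG r m (nth xs) g \<in> G m" if "xs \<in> T m" for m xs
    using fam_img[OF G famap_nth g(1)] that unfolding T_def by blast
  have img: "\<psi> m v \<in> G m" for m v
    unfolding \<psi>_def using subsp_sum[OF fam_subsp[OF G] finT, where u="\<lambda>xs. AG r m (nth xs) g" and c=v] uG by blast
  have lin: "lin_on (PFA r m) (\<psi> m)" for m
    unfolding lin_on_def \<psi>_def by (auto simp: distrib_right sum.distrib sum_distrib_left mult.assoc)
  have nat: "\<psi> m' (PFA_act m m' f v) = AG m m' f (\<psi> m v)" if f: "famap m m' f" and v: "v \<in> PFA r m" for m m' f v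
  proof
    fix a
    have mapT: "map f ` T m \<subseteq> T m'" using f by (auto simp: T_def tuples_def famap_def subset_iff)
    have "\<psi> m' (PFA_act m m' f v) a
        = (\<Sum>ys\<in>T m'. (\<Sum>xs\<in>{xs \<in> T m. map f xs = ys}. v xs) * AG r m' (nth ys) g a)"
      unfolding \<psi>_def PFA_act_def lpush_def T_def
      by (rule sum.cong) (auto simp: tuples_def)
    also have "\<dots> = (\<Sum>ys\<in>T m'. \<Sum>xs\<in>{xs \<in> T m. map f xs = ys}. v xs * AG r m' (nth (map f xs)) g a)"
    proof (rule sum.cong[OF refl])
      fix ys assume "ys \<in> T m'"
      show "(\<Sum>xs\<in>{xs \<in> T m. map f xs = ys}. v xs) * AG r m' (nth ys) g a
          = (\<Sum>xs\<in>{xs \<in> T m. map f xs = ys}. v xs * AG r m' (nth (map f xs)) g a)"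
        unfolding sum_distrib_right by (rule sum.cong) auto
    qed
    also have "\<dots> = (\<Sum>xs\<in>T m. v xs * AG r m' (nth (map f xs)) g a)"
      by (rule sum.group[OF finT finT mapT])
    also have "\<dots> = (\<Sum>xs\<in>T m. v xs * AG m m' f (AG r m (nth xs) g) a)"
    proof (rule sum.cong[OF refl])
      fix xs assume xs: "xs \<in> T m"
      have fx: "famap r m (nth xs)" using famap_nth xs unfolding T_def by blast
      have "famap r m' (f \<circ> nth xs)" using f fx by (auto simp: famap_def)
      then have "AG r m' (f \<circ> nth xs) g = AG r m' (nth (map f xs)) g"
        using fam_cong[OF G _ _ g(1), of m' "f \<circ> nth xs" "nth (map f xs)"] xs
        by (auto simp: T_def tuples_def)
      moreover have "AG r m' (f \<circ> nth xs) g = AG m m' f (AG r m (nth xs) g)"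
        using fam_comp[OF G fx f g(1)] .
      ultimately show "v xs * AG r m' (nth (map f xs)) g a = v xs * AG m m' f (AG r m (nth xs) g) a"
        by simp
    qed
    also have "\<dots> = AG m m' f (\<psi> m v) a"
      unfolding \<psi>_def using lin_on_sum[OF fam_lin[OF G f] fam_subsp[OF G] finT, where u="\<lambda>xs. AG r m (nth xs) g" and c=v] uG
      by simp
    finally show "\<psi> m' (PFA_act m m' f v) a = AG m m' f (\<psi> m v) a" .
  qed
  have fn: "fa_nat (PFA r) PFA_act G AG \<psi>"
    unfolding fa_nat_def using lin img nat by blast
  have lift: "p m (\<psi> m v) = \<phi> m v" if v: "v \<in> PFA r m" for m v
  proof -
    have dP: "\<forall>xs\<in>T m. delta xs \<in> PFA r m" using delta_PFA unfolding T_def by blast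
    have pu: "p m (AG r m (nth xs) g) = \<phi> m (delta xs)" if xs: "xs \<in> T m" for xs
    proof -
      have fx: "famap r m (nth xs)" using famap_nth xs unfolding T_def by blast
      have "p m (AG r m (nth xs) g) = AH r m (nth xs) (p r g)" using fan_nat[OF p fx g(1)] .
      also have "\<dots> = AH r m (nth xs) (\<phi> r e)" using g(2) by simp
      also have "\<dots> = \<phi> m (PFA_act r m (nth xs) e)" using fan_nat[OF phi fx eP] by simp
      also have "PFA_act r m (nth xs) e = delta xs"
        unfolding PFA_act_def e_def using lpush_delta xs unfolding T_def by blast
      finally show ?thesis .
    qed
    have "p m (\<psi> m v) = (\<lambda>y. \<Sum>xs\<in>T m. v xs * p m (AG r m (nth xs) g) y)"
      unfolding \<psi>_def using lin_on_sum[OF fan_lin[OF p] fam_subsp[OF G] finT, where u="\<lambda>xs. AG r m (nth xs) g" and c=v] uG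
      by simp
    also have "\<dots> = (\<lambda>y. \<Sum>xs\<in>T m. v xs * \<phi> m (delta xs) y)" using pu by simp
    also have "\<dots> = \<phi> m (\<lambda>z. \<Sum>xs\<in>T m. v xs * delta xs z)"
      by (subst lin_on_sum[OF fan_lin[OF phi, of m] fam_subsp[OF fa_module_PFA] finT[of m], where u=delta and c=v]) (use dP in auto)
    also have "(\<lambda>z. \<Sum>xs\<in>T m. v xs * delta xs z) = v" using delta_expand[OF v] unfolding T_def by simp
    finally show ?thesis .
  qed
  show ?thesis using fn lift by blast
qed


definition good :: "nat \<Rightarrow> nat \<Rightarrow> nat option list \<Rightarrow> bool" where
  "good n m z \<longleftrightarrow> z \<in> tuples (optset m) (Suc n) \<and> hd z \<noteq> None"

definition Psum :: "nat \<Rightarrow> nat \<Rightarrow> (nat option list \<Rightarrow> 'k::field) \<Rightarrow> nat option list \<Rightarrow> 'k" where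
  "Psum m i \<Phi> z = (\<Sum>y<m. \<Phi> (z[i := Some y]))"

definition Top :: "nat \<Rightarrow> nat \<Rightarrow> nat \<Rightarrow> (nat option list \<Rightarrow> 'k::field) \<Rightarrow> nat option list \<Rightarrow> 'k" where
  "Top n i m \<Phi> z = (if good n m z then (if z!i = None then Psum m i \<Phi> z
      else \<Phi> z - (if z!i = hd z then Psum m i \<Phi> z else 0)) else 0)"

definition Sop :: "nat \<Rightarrow> nat \<Rightarrow> nat \<Rightarrow> (nat option list \<Rightarrow> 'k::field) \<Rightarrow> nat option list \<Rightarrow> 'k" where
  "Sop n i m \<Phi> z = (if good n m z \<and> z!i \<noteq> None then \<Phi> z + (if z!i = hd z then \<Phi> (z[i:=None]) else 0) else 0)"

definition Vsp :: "nat \<Rightarrow> nat \<Rightarrow> nat \<Rightarrow> (nat option list \<Rightarrow> 'k::field) set" where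
  "Vsp n j m = {\<Phi>. (\<forall>z. \<not> good n m z \<longrightarrow> \<Phi> z = 0)
     \<and> (\<forall>i z. j < i \<longrightarrow> i \<le> n \<longrightarrow> good n m z \<longrightarrow> z!i = None \<longrightarrow> \<Phi> z = 0)
     \<and> (\<forall>i z. 1 \<le> i \<longrightarrow> i \<le> j \<longrightarrow> Psum m i \<Phi> z = 0)}"

lemma optset_simps[simp]: "None \<in> optset m" "Some x \<in> optset m \<longleftrightarrow> x < m"
  by (auto simp: optset_def)

lemma finite_optset[simp]: "finite (optset m)" by (simp add: optset_def)

lemma hd_upd: "i \<noteq> 0 \<Longrightarrow> hd (z[i:=a]) = hd z"
  by (cases z; cases i) auto

lemma good_len: "good n m z \<Longrightarrow> length z = Suc n"
  by (simp add: good_def tuples_def)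

lemma good_upd_swap:
  assumes "good n m (z[i:=a])" "b \<in> optset m" "i \<noteq> 0"
  shows "good n m (z[i:=b])"
proof -
  have "z[i:=b] \<in> tuples (optset m) (Suc n)"
    using assms(1,2) tuples_update_swap[of z i a "optset m" "Suc n" b] unfolding good_def by blast
  moreover have "hd (z[i:=b]) = hd (z[i:=a])" using hd_upd[OF assms(3), of z b] hd_upd[OF assms(3), of z a] by simp
  ultimately show ?thesis using assms(1) unfolding good_def by simp
qed

lemma good_upd_iff:
  assumes "a \<in> optset m" "b \<in> optset m" "i \<noteq> 0"
  shows "good n m (z[i:=a]) \<longleftrightarrow> good n m (z[i:=b])"
  using good_upd_swap[of n m z i a b] good_upd_swap[of n m z i b a] assms by blast

lemma good_self_upd:
  assumes "good n m z" "i \<noteq> 0" "b \<in> optset m" shows "good n m (z[i:=b])"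
proof -
  have "z[i := z!i] = z" by simp
  then show ?thesis using good_upd_swap[of n m z i "z!i" b] assms by simp
qed

lemma good_hd: "good n m z \<Longrightarrow> \<exists>a. hd z = Some a \<and> a < m"
proof -
  assume g: "good n m z"
  then have "z \<noteq> []" by (auto simp: good_def tuples_def)
  then have "hd z \<in> set z" by simp
  then have "hd z \<in> optset m" using g by (auto simp: good_def tuples_def)
  then show ?thesis using g by (cases "hd z") (auto simp: good_def)
qed

lemma Psum_overwrite[simp]: "Psum m i \<Phi> (z[i:=a]) = Psum m i \<Phi> z"
  by (simp add: Psum_def)

lemma Psum_comm:
  assumes "i \<noteq> i'"
  shows "Psum m i' (Psum m i \<Phi>) z = Psum m i (Psum m i' \<Phi>) z"
proof -
  have "Psum m i' (Psum m i \<Phi>) z = (\<Sum>y<m. \<Sum>x<m. \<Phi> ((z[i' := Some y])[i := Some x]))"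
    by (simp add: Psum_def)
  also have "\<dots> = (\<Sum>x<m. \<Sum>y<m. \<Phi> ((z[i' := Some y])[i := Some x]))" by (rule sum.swap)
  also have "\<dots> = (\<Sum>x<m. \<Sum>y<m. \<Phi> ((z[i := Some x])[i' := Some y]))"
    by (simp only: list_update_swap[OF assms])
  also have "\<dots> = Psum m i (Psum m i' \<Phi>) z" by (simp add: Psum_def)
  finally show ?thesis .
qed

lemma Psum_unrestr:
  assumes sup: "\<forall>z. \<not> good n m z \<longrightarrow> \<Phi> z = 0" and i: "i \<noteq> 0"
    and c: "\<forall>xs\<in>tuples (optset m) (Suc n). Psum m i \<Phi> xs = 0"
  shows "Psum m i \<Phi> z = 0"
proof (cases "z[i:=None] \<in> tuples (optset m) (Suc n)")
  case True
  have "Psum m i \<Phi> z = Psum m i \<Phi> (z[i:=None])" by simp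
  moreover have "Psum m i \<Phi> (z[i:=None]) = 0" using c True by blast
  ultimately show ?thesis by simp
next
  case False
  have "\<Phi> (z[i:=Some y]) = 0" if "y < m" for y
  proof -
    have "z[i:=Some y] \<notin> tuples (optset m) (Suc n)"
      using False tuples_update_swap[of z i "Some y" "optset m" "Suc n" None] by auto
    then show ?thesis using sup by (simp add: good_def)
  qed
  then show ?thesis by (simp add: Psum_def)
qed

lemma Vsp_n: "Vsp n n m = (PPbarKbar n m :: (nat option list \<Rightarrow> 'k::field) set)"
proof (intro set_eqI iffI)
  fix \<Phi> :: "nat option list \<Rightarrow> 'k::field" assume "\<Phi> \<in> Vsp n n m"
  then show "\<Phi> \<in> PPbarKbar n m" unfolding Vsp_def PPbarKbar_def by (auto simp: good_def Psum_def)
next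
  fix \<Phi> :: "nat option list \<Rightarrow> 'k::field" assume a: "\<Phi> \<in> PPbarKbar n m"
  have sup: "\<forall>z. \<not> good n m z \<longrightarrow> \<Phi> z = 0" using a by (auto simp: PPbarKbar_def good_def)
  have "Psum m i \<Phi> z = 0" if "1 \<le> i" "i \<le> n" for i z
    using Psum_unrestr[OF sup, of i z] a that by (auto simp: PPbarKbar_def Psum_def)
  then show "\<Phi> \<in> Vsp n n m" using sup unfolding Vsp_def by auto
qed

lemma V_sup: "\<Phi> \<in> Vsp n j m \<Longrightarrow> \<not> good n m z \<Longrightarrow> \<Phi> z = 0"
  by (simp add: Vsp_def)
lemma V_none: "\<Phi> \<in> Vsp n j m \<Longrightarrow> j < i \<Longrightarrow> i \<le> n \<Longrightarrow> z!i = None \<Longrightarrow> \<Phi> z = 0"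
  unfolding Vsp_def by (cases "good n m z") auto
lemma V_psum: "\<Phi> \<in> Vsp n j m \<Longrightarrow> 1 \<le> i \<Longrightarrow> i \<le> j \<Longrightarrow> Psum m i \<Phi> z = 0"
  by (simp add: Vsp_def)


lemma Psum_bad:
  assumes "\<not> good n m (z[i:=None])" "i \<noteq> 0" "\<forall>w. \<not> good n m w \<longrightarrow> \<Psi> w = 0"
  shows "Psum m i \<Psi> z = 0"
proof -
  have "\<Psi> (z[i:=Some y]) = 0" if "y < m" for y
    using assms good_upd_swap[of n m z i "Some y" None] by auto
  then show ?thesis by (simp add: Psum_def)
qed

lemma Psum_zero_all:
  assumes "\<And>y. y < m \<Longrightarrow> \<Psi> (z[i:=Some y]) = 0" shows "Psum m i \<Psi> z = 0"
  using assms by (simp add: Psum_def)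

lemma good_i_lt: "good n m z \<Longrightarrow> i \<le> n \<Longrightarrow> i < length z"
  using good_len by fastforce

lemma Top_sup: "\<not> good n m z \<Longrightarrow> Top n i m \<Phi> z = 0"
  by (simp add: Top_def)
lemma Sop_sup: "\<not> good n m z \<Longrightarrow> Sop n i m \<Phi> z = 0"
  by (simp add: Sop_def)

lemma Psum_sum_ind:
  assumes "a < m"
  shows "(\<Sum>y<m. \<Phi> (z[i := Some y]) - (if Some y = Some a then c else 0)) = Psum m i \<Phi> z - (c::'k::field)"
  using assms by (simp add: Psum_def sum_subtractf)

lemma Top_in:
  fixes \<Phi> :: "nat option list \<Rightarrow> 'k::field"
  assumes V: "\<Phi> \<in> Vsp n j m" and jn: "Suc j \<le> n"
  shows "Top n (Suc j) m \<Phi> \<in> Vsp n (Suc j) m"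
proof -
  define i where "i = Suc j"
  define \<Psi> where "\<Psi> = Top n i m \<Phi>"
  have sup: "\<forall>z. \<not> good n m z \<longrightarrow> \<Psi> z = 0" by (simp add: \<Psi>_def Top_sup)
  have b: "\<Psi> z = 0" if "Suc j < i'" "i' \<le> n" "good n m z" "z!i' = None" for i' z
  proof -
    have ii: "i \<noteq> i'" using that(1) i_def by simp
    have 1: "\<Phi> z = 0" using V_none[OF V _ that(2,4)] that(1) by simp
    have 2: "Psum m i \<Phi> z = 0"
      by (rule Psum_zero_all, rule V_none[OF V _ that(2)]) (use that(1) ii that(4) in auto)
    show ?thesis unfolding \<Psi>_def Top_def using 1 2 by simp
  qed
  have c: "Psum m i' \<Psi> z = 0" if i1: "1 \<le> i'" and i2: "i' \<le> Suc j" for i' z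
  proof (cases "good n m (z[i':=None])")
    case False then show ?thesis using Psum_bad[OF False _ sup] i1 by simp
  next
    case True
    have i'n: "i' \<le> n" using i2 jn by simp
    have gy: "good n m (z[i':=Some y])" if "y < m" for y
      using good_upd_swap[OF True, of "Some y"] that \<open>1 \<le> i'\<close> by simp
    have lz: "length z = Suc n" using good_len[OF True] by simp
    have hz: "hd (z[i':=Some y]) = hd z" for y using hd_upd[of i'] i1 by simp
    obtain a where a: "hd z = Some a" "a < m" using good_hd[OF True] hd_upd[of i' z None] i1 by auto
    show ?thesis
    proof (cases "i' = i")
      case True
      have ilt: "i < length z" using lz i'n True by simp
      have "\<Psi> (z[i:=Some y]) = \<Phi> (z[i:=Some y]) - (if Some y = Some a then Psum m i \<Phi> z else 0)"
        if "y < m" for y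
        using gy[OF that] \<open>i' = i\<close> ilt a(1) hz[of y] unfolding \<Psi>_def Top_def by simp
      then have "Psum m i \<Psi> z = (\<Sum>y<m. \<Phi> (z[i := Some y]) - (if Some y = Some a then Psum m i \<Phi> z else 0))"
        unfolding Psum_def by simp
      also have "\<dots> = 0" using Psum_sum_ind[OF a(2), of \<Phi> z i "Psum m i \<Phi> z"] by simp
      finally show ?thesis using True by simp
    next
      case False
      have ij: "i' \<le> j" using False i2 i_def by simp
      have ii: "i \<noteq> i'" using False by simp
      have zi: "(z[i':=Some y])!i = z!i" for y using ii by simp
      have p0: "Psum m i' \<Phi> z = 0" using V_psum[OF V i1 ij] .
      have pp: "Psum m i' (Psum m i \<Phi>) z = 0"
      proof -
        have "Psum m i' (Psum m i \<Phi>) z = Psum m i (Psum m i' \<Phi>) z" by (rule Psum_comm[OF ii])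
        also have "\<dots> = 0" by (rule Psum_zero_all) (rule V_psum[OF V i1 ij])
        finally show ?thesis .
      qed
      show ?thesis
      proof (cases "z!i = None")
        case True
        have "\<Psi> (z[i':=Some y]) = Psum m i \<Phi> (z[i':=Some y])" if "y < m" for y
          using gy[OF that] zi True unfolding \<Psi>_def Top_def by simp
        then have "Psum m i' \<Psi> z = Psum m i' (Psum m i \<Phi>) z" unfolding Psum_def by simp
        then show ?thesis using pp by simp
      next
        case False
        then obtain b where zb: "z!i = Some b" by auto
        define c where "c = (if z!i = hd z then (1::'k) else 0)"
        have "\<Psi> (z[i':=Some y]) = \<Phi> (z[i':=Some y]) - c * Psum m i \<Phi> (z[i':=Some y])" if "y < m" for y
          using gy[OF that] zi zb hz[of y] unfolding \<Psi>_def Top_def c_def by simp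
        then have "Psum m i' \<Psi> z = Psum m i' \<Phi> z - c * Psum m i' (Psum m i \<Phi>) z"
          unfolding Psum_def by (simp add: sum_subtractf sum_distrib_left)
        then show ?thesis using p0 pp by simp
      qed
    qed
  qed
  show ?thesis unfolding Vsp_def using sup b c i_def \<Psi>_def by auto
qed


lemma Psum_Sop:
  assumes g: "good n m z" and i: "1 \<le> i" "i \<le> n"
  shows "Psum m i (Sop n i m \<Phi>) z = Psum m i \<Phi> z + \<Phi> (z[i:=None])"
proof -
  obtain a where a: "hd z = Some a" "a < m" using good_hd[OF g] by auto
  have ilt: "i < length z" using good_i_lt[OF g i(2)] .
  have "Sop n i m \<Phi> (z[i:=Some y]) = \<Phi> (z[i:=Some y]) + (if y = a then \<Phi> (z[i:=None]) else 0)"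
    if "y < m" for y
    using good_self_upd[OF g _, of i "Some y"] that i ilt hd_upd[of i z "Some y"] a(1)
    unfolding Sop_def by simp
  then have "Psum m i (Sop n i m \<Phi>) z = (\<Sum>y<m. \<Phi> (z[i:=Some y]) + (if y = a then \<Phi> (z[i:=None]) else 0))"
    unfolding Psum_def by simp
  also have "\<dots> = Psum m i \<Phi> z + \<Phi> (z[i:=None])" using a(2) by (simp add: Psum_def sum.distrib)
  finally show ?thesis .
qed

lemma Sop_in:
  fixes \<Phi> :: "nat option list \<Rightarrow> 'k::field"
  assumes V: "\<Phi> \<in> Vsp n (Suc j) m" and jn: "Suc j \<le> n"
  shows "Sop n (Suc j) m \<Phi> \<in> Vsp n j m"
proof -
  define i where "i = Suc j"
  define \<Theta> where "\<Theta> = Sop n i m \<Phi>"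
  have sup: "\<forall>z. \<not> good n m z \<longrightarrow> \<Theta> z = 0" by (simp add: \<Theta>_def Sop_sup)
  have b: "\<Theta> z = 0" if i1: "j < i'" and i2: "i' \<le> n" and gz: "good n m z" and zn: "z!i' = None" for i' z
  proof (cases "i' = i")
    case True then show ?thesis using zn unfolding \<Theta>_def Sop_def by simp
  next
    case False
    then have ii: "Suc j < i'" using i1 i_def by simp
    have 1: "\<Phi> z = 0" using V_none[OF V ii i2 zn] .
    have 2: "\<Phi> (z[i:=None]) = 0" using V_none[OF V ii i2] zn False by simp
    show ?thesis unfolding \<Theta>_def Sop_def using 1 2 by simp
  qed
  have c: "Psum m i' \<Theta> z = 0" if i1: "1 \<le> i'" and i2: "i' \<le> j" for i' z
  proof (cases "good n m (z[i':=None])")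
    case False then show ?thesis using Psum_bad[OF False _ sup] i1 by simp
  next
    case True
    have gy: "good n m (z[i':=Some y])" if "y < m" for y
      using good_upd_swap[OF True, of "Some y"] that i1 by simp
    have hz: "hd (z[i':=Some y]) = hd z" for y using hd_upd[of i'] i1 by simp
    have ii: "i' \<noteq> i" using i2 i_def by simp
    have zi: "(z[i':=Some y])!i = z!i" for y using ii by simp
    have sw: "(z[i':=Some y])[i:=None] = (z[i:=None])[i':=Some y]" for y
      using list_update_swap[OF ii] by metis
    define c where "c = (if z!i = hd z then (1::'k) else 0)"
    define d where "d = (if z!i \<noteq> None then (1::'k) else 0)"
    have "\<Theta> (z[i':=Some y]) = d * (\<Phi> (z[i':=Some y]) + c * \<Phi> ((z[i:=None])[i':=Some y]))" if "y < m" for y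
      using gy[OF that] zi hz[of y] sw[of y] unfolding \<Theta>_def Sop_def c_def d_def by simp
    then have "Psum m i' \<Theta> z = d * (Psum m i' \<Phi> z + c * Psum m i' \<Phi> (z[i:=None]))"
      unfolding Psum_def by (simp add: distrib_left sum.distrib sum_distrib_left)
    moreover have "Psum m i' \<Phi> w = 0" for w using V_psum[OF V i1] i2 by simp
    ultimately show ?thesis by simp
  qed
  show ?thesis unfolding Vsp_def using sup b c i_def \<Theta>_def by auto
qed

lemma Sop_Top:
  fixes \<Phi> :: "nat option list \<Rightarrow> 'k::field"
  assumes V: "\<Phi> \<in> Vsp n j m" and jn: "Suc j \<le> n"
  shows "Sop n (Suc j) m (Top n (Suc j) m \<Phi>) = \<Phi>"
proof
  fix z
  define i where "i = Suc j"
  show "Sop n (Suc j) m (Top n (Suc j) m \<Phi>) z = \<Phi> z"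
  proof (cases "good n m z")
    case False then show ?thesis using V_sup[OF V False] by (simp add: Sop_def)
  next
    case g: True
    show ?thesis
    proof (cases "z!i = None")
      case True
      then show ?thesis using V_none[OF V _ _ True] jn i_def by (simp add: Sop_def)
    next
      case False
      then obtain b where zb: "z!i = Some b" by auto
      have ilt: "i < length z" using good_i_lt[OF g] jn i_def by simp
      have g2: "good n m (z[i:=None])" using good_self_upd[OF g, of i None] i_def by simp
      have t2: "Top n i m \<Phi> (z[i:=None]) = Psum m i \<Phi> z" using g2 ilt by (simp add: Top_def)
      show ?thesis using g zb t2 unfolding i_def[symmetric] by (simp add: Sop_def Top_def)
    qed
  qed
qed

lemma Top_Sop:
  fixes \<Phi> :: "nat option list \<Rightarrow> 'k::field"
  assumes V: "\<Phi> \<in> Vsp n (Suc j) m" and jn: "Suc j \<le> n"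
  shows "Top n (Suc j) m (Sop n (Suc j) m \<Phi>) = \<Phi>"
proof
  fix z
  define i where "i = Suc j"
  show "Top n (Suc j) m (Sop n (Suc j) m \<Phi>) z = \<Phi> z"
  proof (cases "good n m z")
    case False then show ?thesis using V_sup[OF V False] by (simp add: Top_def)
  next
    case g: True
    have ps: "Psum m i (Sop n i m \<Phi>) z = Psum m i \<Phi> z + \<Phi> (z[i:=None])"
      using Psum_Sop[OF g, of i] jn i_def by simp
    have p0: "Psum m i \<Phi> z = 0" using V_psum[OF V, of i] i_def by simp
    show ?thesis
    proof (cases "z!i = None")
      case True
      then have "z[i:=None] = z" by (metis list_update_id)
      then show ?thesis using g True ps p0 unfolding i_def[symmetric] by (simp add: Top_def)
    next
      case False
      then obtain b where zb: "z!i = Some b" by auto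
      show ?thesis using g zb ps p0 unfolding i_def[symmetric] by (simp add: Top_def Sop_def)
    qed
  qed
qed

lemma Psum_add: "Psum m i (\<lambda>z. u z + v z) = (\<lambda>z. Psum m i u z + Psum m i v z)"
  by (simp add: Psum_def sum.distrib fun_eq_iff)
lemma Psum_smult: "Psum m i (\<lambda>z. c * u z) = (\<lambda>z. c * Psum m i u z)"
  by (simp add: Psum_def sum_distrib_left fun_eq_iff)

lemma lin_Top: "lin_on V (Top n i m)"
  unfolding lin_on_def Top_def by (simp add: Psum_add Psum_smult fun_eq_iff algebra_simps)


definition Fib :: "nat \<Rightarrow> (nat \<Rightarrow> nat) \<Rightarrow> nat option list \<Rightarrow> nat option list set" where
  "Fib m f z = {w \<in> tuples (optset m) (length z). map (map_option f) w = z}"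

definition Rset :: "nat \<Rightarrow> (nat \<Rightarrow> nat) \<Rightarrow> nat \<Rightarrow> nat option list \<Rightarrow> nat option list set" where
  "Rset m f i z = {w \<in> tuples (optset m) (length z). w!i \<noteq> None \<and> (\<forall>k<length z. k \<noteq> i \<longrightarrow> map_option f (w!k) = z!k)}"

lemma fin_Fib: "finite (Fib m f z)"
  unfolding Fib_def by (rule finite_subset[OF _ finite_tuples[OF finite_optset, of m "length z"]]) auto
lemma fin_Rset: "finite (Rset m f i z)"
  unfolding Rset_def by (rule finite_subset[OF _ finite_tuples[OF finite_optset, of m "length z"]]) auto

lemma lpushO_Fib: "lpush (optset m) (map_option f) \<Phi> z = (\<Sum>w\<in>Fib m f z. \<Phi> w)"
  by (simp add: lpush_def Fib_def)

lemma map_eq_nth: "map h w = z \<longleftrightarrow> length w = length z \<and> (\<forall>k<length z. h (w!k) = z!k)"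
  by (auto simp: list_eq_iff_nth_eq)

lemma Fib_mem: "w \<in> Fib m f z \<longleftrightarrow> length w = length z \<and> (\<forall>k<length z. w!k \<in> optset m \<and> map_option f (w!k) = z!k)"
  unfolding Fib_def tuples_nth map_eq_nth by auto

lemma Rset_mem: "w \<in> Rset m f i z \<longleftrightarrow> length w = length z \<and> (\<forall>k<length z. w!k \<in> optset m) \<and> w!i \<noteq> None
    \<and> (\<forall>k<length z. k \<noteq> i \<longrightarrow> map_option f (w!k) = z!k)"
  unfolding Rset_def tuples_nth by auto

lemma optset_Some: "Some x \<in> optset m \<Longrightarrow> x < m" by simp

lemma Ra:
  assumes f: "famap m m' f" and i: "i < length z"
  shows "(\<Sum>y<m'. \<Sum>w\<in>Fib m f (z[i:=Some y]). \<Phi> w) = (\<Sum>w\<in>Rset m f i z. \<Phi> w)"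
proof -
  define h where "h w = the (map_option f (w!i))" for w
  have img: "h ` Rset m f i z \<subseteq> {..<m'}"
  proof
    fix y assume "y \<in> h ` Rset m f i z"
    then obtain w where w: "w \<in> Rset m f i z" "y = h w" by blast
    then obtain x where x: "w!i = Some x" using Rset_mem by blast
    have "w!i \<in> optset m" using w(1) i by (simp add: Rset_mem)
    then have "x < m" using x by simp
    then show "y \<in> {..<m'}" using f w(2) x by (simp add: h_def famap_def)
  qed
  have eq: "{w. w \<in> Rset m f i z \<and> h w = y} = Fib m f (z[i:=Some y])" for y
  proof (intro set_eqI iffI)
    fix w assume a: "w \<in> {w. w \<in> Rset m f i z \<and> h w = y}"
    then have r: "w \<in> Rset m f i z" and hy: "h w = y" by auto
    then obtain x where x: "w!i = Some x" using Rset_mem by blast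
    show "w \<in> Fib m f (z[i:=Some y])"
      unfolding Fib_mem using r x hy i by (auto simp: Rset_mem h_def nth_list_update)
  next
    fix w assume a: "w \<in> Fib m f (z[i:=Some y])"
    then have l: "length w = length z" and k: "\<And>k. k < length z \<Longrightarrow> w!k \<in> optset m \<and> map_option f (w!k) = (z[i:=Some y])!k"
      by (auto simp: Fib_mem)
    have wi: "map_option f (w!i) = Some y" using k[OF i] i by simp
    then have "w!i \<noteq> None" by auto
    moreover have "h w = y" unfolding h_def by (simp only: wi option.sel)
    moreover have "\<forall>k<length z. k \<noteq> i \<longrightarrow> map_option f (w!k) = z!k" using k by simp
    ultimately show "w \<in> {w. w \<in> Rset m f i z \<and> h w = y}" using l k by (simp add: Rset_mem)
  qed
  have "(\<Sum>w\<in>Rset m f i z. \<Phi> w) = (\<Sum>y<m'. \<Sum>w\<in>{w. w \<in> Rset m f i z \<and> h w = y}. \<Phi> w)"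
    using sum.group[OF fin_Rset finite_lessThan img, of \<Phi>] by simp
  also have "\<dots> = (\<Sum>y<m'. \<Sum>w\<in>Fib m f (z[i:=Some y]). \<Phi> w)" using eq by simp
  finally show ?thesis by simp
qed

lemma sum_bij_pairs:
  assumes "bij_betw (\<lambda>(w,y). w[i:=Some y]) (A \<times> {..<m}) B" "finite A"
  shows "(\<Sum>w\<in>A. \<Sum>y<m. \<Phi> (w[i:=Some y])) = (\<Sum>w\<in>B. \<Phi> w)"
proof -
  have "(\<Sum>w\<in>A. \<Sum>y<m. \<Phi> (w[i:=Some y])) = (\<Sum>p\<in>A \<times> {..<m}. \<Phi> ((\<lambda>(w,y). w[i:=Some y]) p))"
    by (simp add: sum.cartesian_product split_def)
  also have "\<dots> = (\<Sum>w\<in>B. \<Phi> w)" by (rule sum.reindex_bij_betw[OF assms(1)])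
  finally show ?thesis .
qed

lemma Rb1:
  assumes zi: "z!i = None" and i: "i < length z"
  shows "(\<Sum>w\<in>Fib m f z. \<Sum>y<m. \<Phi> (w[i:=Some y])) = (\<Sum>w\<in>Rset m f i z. \<Phi> w)"
proof (rule sum_bij_pairs[OF _ fin_Fib])
  have wi: "w!i = None" if "w \<in> Fib m f z" for w
    using that zi i by (auto simp: Fib_mem)
  show "bij_betw (\<lambda>(w,y). w[i:=Some y]) (Fib m f z \<times> {..<m}) (Rset m f i z)"
  proof (rule bij_betw_byWitness[where f'="\<lambda>r. (r[i:=None], the (r!i))"])
    show "\<forall>a\<in>Fib m f z \<times> {..<m}. (\<lambda>r. (r[i:=None], the (r!i))) ((\<lambda>(w,y). w[i:=Some y]) a) = a"
    proof
      fix a assume a: "a \<in> Fib m f z \<times> {..<m}"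
      obtain w y where wy: "a = (w,y)" "w \<in> Fib m f z" "y < m" using a by auto
      have l: "length w = length z" using wy(2) by (simp add: Fib_mem)
      have "w[i:=None] = w" using wi[OF wy(2)] by (metis list_update_id)
      then show "(\<lambda>r. (r[i:=None], the (r!i))) ((\<lambda>(w,y). w[i:=Some y]) a) = a"
        using wy l i by simp
    qed
    show "\<forall>r\<in>Rset m f i z. (\<lambda>(w,y). w[i:=Some y]) ((\<lambda>r. (r[i:=None], the (r!i))) r) = r"
    proof
      fix r assume r: "r \<in> Rset m f i z"
      then obtain x where x: "r!i = Some x" using Rset_mem by blast
      show "(\<lambda>(w,y). w[i:=Some y]) ((\<lambda>r. (r[i:=None], the (r!i))) r) = r"
        using x by (simp, metis list_update_id)
    qed
    show "(\<lambda>(w,y). w[i:=Some y]) ` (Fib m f z \<times> {..<m}) \<subseteq> Rset m f i z"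
    proof
      fix r assume "r \<in> (\<lambda>(w,y). w[i:=Some y]) ` (Fib m f z \<times> {..<m})"
      then obtain w y where wy: "r = w[i:=Some y]" "w \<in> Fib m f z" "y < m" by auto
      then show "r \<in> Rset m f i z" using i by (auto simp: Fib_mem Rset_mem nth_list_update)
    qed
    show "(\<lambda>r. (r[i:=None], the (r!i))) ` Rset m f i z \<subseteq> Fib m f z \<times> {..<m}"
    proof
      fix p assume "p \<in> (\<lambda>r. (r[i:=None], the (r!i))) ` Rset m f i z"
      then obtain r where r: "p = (r[i:=None], the (r!i))" "r \<in> Rset m f i z" by auto
      then obtain x where x: "r!i = Some x" using Rset_mem by blast
      have "r!i \<in> optset m" using r(2) i by (simp add: Rset_mem)
      then have xm: "x < m" using x by simp
      have "r[i:=None] \<in> Fib m f z" using r(2) i zi by (auto simp: Fib_mem Rset_mem nth_list_update)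
      then show "p \<in> Fib m f z \<times> {..<m}" using r(1) x xm by simp
    qed
  qed
qed

lemma hd_nth0: "xs \<noteq> [] \<Longrightarrow> hd xs = xs!0" by (cases xs) auto

lemma Rb2:
  assumes zi: "z!i = hd z" and i: "i < length z" "i \<noteq> 0"
  shows "(\<Sum>w\<in>{w \<in> Fib m f z. w!i = hd w}. \<Sum>y<m. \<Phi> (w[i:=Some y])) = (\<Sum>w\<in>Rset m f i z. \<Phi> w)"
proof (rule sum_bij_pairs)
  show "finite {w \<in> Fib m f z. w!i = hd w}" using fin_Fib by simp
  have z0: "0 < length z" using i(1) by arith
  show "bij_betw (\<lambda>(w,y). w[i:=Some y]) ({w \<in> Fib m f z. w!i = hd w} \<times> {..<m}) (Rset m f i z)"
  proof (rule bij_betw_byWitness[where f'="\<lambda>r. (r[i:=hd r], the (r!i))"])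
    show "\<forall>a\<in>{w \<in> Fib m f z. w!i = hd w} \<times> {..<m}. (\<lambda>r. (r[i:=hd r], the (r!i))) ((\<lambda>(w,y). w[i:=Some y]) a) = a"
    proof
      fix a assume a: "a \<in> {w \<in> Fib m f z. w!i = hd w} \<times> {..<m}"
      obtain w y where wy: "a = (w,y)" "w \<in> Fib m f z" "w!i = hd w" "y < m" using a by auto
      have l: "length w = length z" using wy(2) by (simp add: Fib_mem)
      have "w[i:=hd w] = w" using wy(3) by (metis list_update_id)
      then show "(\<lambda>r. (r[i:=hd r], the (r!i))) ((\<lambda>(w,y). w[i:=Some y]) a) = a"
        using wy l i hd_upd[OF i(2), of w "Some y"] by simp
    qed
    show "\<forall>r\<in>Rset m f i z. (\<lambda>(w,y). w[i:=Some y]) ((\<lambda>r. (r[i:=hd r], the (r!i))) r) = r"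
    proof
      fix r assume r: "r \<in> Rset m f i z"
      then obtain x where x: "r!i = Some x" using Rset_mem by blast
      show "(\<lambda>(w,y). w[i:=Some y]) ((\<lambda>r. (r[i:=hd r], the (r!i))) r) = r"
        using x by (simp, metis list_update_id)
    qed
    show "(\<lambda>(w,y). w[i:=Some y]) ` ({w \<in> Fib m f z. w!i = hd w} \<times> {..<m}) \<subseteq> Rset m f i z"
    proof
      fix r assume "r \<in> (\<lambda>(w,y). w[i:=Some y]) ` ({w \<in> Fib m f z. w!i = hd w} \<times> {..<m})"
      then obtain w y where wy: "r = w[i:=Some y]" "w \<in> Fib m f z" "y < m" by auto
      then show "r \<in> Rset m f i z" using i by (auto simp: Fib_mem Rset_mem nth_list_update)
    qed
    show "(\<lambda>r. (r[i:=hd r], the (r!i))) ` Rset m f i z \<subseteq> {w \<in> Fib m f z. w!i = hd w} \<times> {..<m}"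
    proof
      fix p assume "p \<in> (\<lambda>r. (r[i:=hd r], the (r!i))) ` Rset m f i z"
      then obtain r where r: "p = (r[i:=hd r], the (r!i))" "r \<in> Rset m f i z" by auto
      then obtain x where x: "r!i = Some x" using Rset_mem by blast
      have lr: "length r = length z" using r(2) by (simp add: Rset_mem)
      have "r!i \<in> optset m" using r(2) i by (simp add: Rset_mem)
      then have xm: "x < m" using x by simp
      have rne: "r \<noteq> []" using lr z0 by auto
      have zne: "z \<noteq> []" using z0 by auto
      have h0: "hd r = r!0" using hd_nth0[OF rne] .
      have r0: "r!0 \<in> optset m" "map_option f (r!0) = z!0" using r(2) z0 i by (auto simp: Rset_mem)
      have zi0: "z!i = z!0" using zi hd_nth0[OF zne] by simp
      have "r[i:=hd r] \<in> Fib m f z"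
        unfolding Fib_mem using r(2) i r0 h0 zi0 by (auto simp: Rset_mem nth_list_update)
      moreover have "(r[i:=hd r])!i = hd (r[i:=hd r])" using hd_upd[OF i(2), of r "hd r"] lr i by simp
      ultimately show "p \<in> {w \<in> Fib m f z. w!i = hd w} \<times> {..<m}" using r(1) x xm by simp
    qed
  qed
qed


lemma optset_map: "famap m m' f \<Longrightarrow> a \<in> optset m \<Longrightarrow> map_option f a \<in> optset m'"
  by (cases a) (auto simp: famap_def)

lemma Fib_len: "w \<in> Fib m f z \<Longrightarrow> length w = length z" by (simp add: Fib_mem)
lemma Fib_nth: "w \<in> Fib m f z \<Longrightarrow> k < length z \<Longrightarrow> map_option f (w!k) = z!k \<and> w!k \<in> optset m"
  by (simp add: Fib_mem)

lemma Fib_hd: assumes "w \<in> Fib m f z" "z \<noteq> []" shows "map_option f (hd w) = hd z"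
proof -
  have wne: "w \<noteq> []" using Fib_len[OF assms(1)] assms(2) by auto
  have "map_option f (w!0) = z!0" using Fib_nth[OF assms(1), of 0] assms(2) by simp
  then show ?thesis using hd_nth0[OF wne] hd_nth0[OF assms(2)] by simp
qed

lemma good_of_Fib: assumes "w \<in> Fib m f z" "good n m' z" shows "good n m w"
proof -
  have lz: "length z = Suc n" using good_len[OF assms(2)] .
  have "w \<in> tuples (optset m) (Suc n)" using assms(1) lz by (auto simp: Fib_mem tuples_nth)
  moreover have "hd w \<noteq> None"
  proof
    assume "hd w = None"
    moreover have "z \<noteq> []" using lz by auto
    ultimately have "hd z = None" using Fib_hd[OF assms(1)] by simp
    then show False using assms(2) by (simp add: good_def)
  qed
  ultimately show ?thesis by (simp add: good_def)
qed

lemma good_map: assumes f: "famap m m' f" and w: "w \<in> Fib m f z" "good n m w" shows "good n m' z"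
proof -
  have l: "length z = Suc n" using Fib_len[OF w(1)] good_len[OF w(2)] by simp
  have "z!k \<in> optset m'" if "k < length z" for k
    using Fib_nth[OF w(1) that] optset_map[OF f] by metis
  then have "z \<in> tuples (optset m') (Suc n)" using l by (simp add: tuples_nth)
  moreover have "hd z \<noteq> None"
  proof
    assume "hd z = None"
    moreover have "z \<noteq> []" using l by auto
    ultimately have "map_option f (hd w) = None" using Fib_hd[OF w(1)] by simp
    then show False using w(2) by (simp add: good_def)
  qed
  ultimately show ?thesis by (simp add: good_def)
qed

lemma Top_nat:
  fixes \<Phi> :: "nat option list \<Rightarrow> 'k::field"
  assumes f: "famap m m' f" and sup: "\<forall>z. \<not> good n m z \<longrightarrow> \<Phi> z = 0" and i: "1 \<le> i" "i \<le> n"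
  shows "Top n i m' (lpush (optset m) (map_option f) \<Phi>) = lpush (optset m) (map_option f) (Top n i m \<Phi>)"
proof
  fix z
  let ?L = "lpush (optset m) (map_option f) \<Phi>"
  have R: "lpush (optset m) (map_option f) (Top n i m \<Phi>) z = (\<Sum>w\<in>Fib m f z. Top n i m \<Phi> w)"
    by (rule lpushO_Fib)
  show "Top n i m' ?L z = lpush (optset m) (map_option f) (Top n i m \<Phi>) z"
  proof (cases "good n m' z")
    case False
    have "Top n i m \<Phi> w = 0" if "w \<in> Fib m f z" for w
      using good_map[OF f that] False Top_sup by blast
    then show ?thesis using False R by (simp add: Top_def)
  next
    case g: True
    have lz: "length z = Suc n" using good_len[OF g] .
    have ilt: "i < length z" using lz i by simp
    have zne: "z \<noteq> []" using lz by auto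
    have gw: "good n m w" if "w \<in> Fib m f z" for w using good_of_Fib[OF that g] .
    have PL: "Psum m' i ?L z = (\<Sum>w\<in>Rset m f i z. \<Phi> w)"
    proof -
      have "Psum m' i ?L z = (\<Sum>y<m'. \<Sum>w\<in>Fib m f (z[i:=Some y]). \<Phi> w)"
        unfolding Psum_def lpushO_Fib by simp
      also have "\<dots> = (\<Sum>w\<in>Rset m f i z. \<Phi> w)" by (rule Ra[OF f ilt])
      finally show ?thesis .
    qed
    show ?thesis
    proof (cases "z!i = None")
      case True
      have "Top n i m \<Phi> w = Psum m i \<Phi> w" if "w \<in> Fib m f z" for w
      proof -
        have "map_option f (w!i) = None" using Fib_nth[OF that ilt] True by simp
        then show ?thesis using gw[OF that] by (simp add: Top_def)
      qed
      then have "lpush (optset m) (map_option f) (Top n i m \<Phi>) z = (\<Sum>w\<in>Fib m f z. \<Sum>y<m. \<Phi> (w[i:=Some y]))"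
        using R by (simp add: Psum_def)
      also have "\<dots> = (\<Sum>w\<in>Rset m f i z. \<Phi> w)" by (rule Rb1[OF True ilt])
      finally show ?thesis using g True PL by (simp add: Top_def)
    next
      case False
      then obtain b where zb: "z!i = Some b" by auto
      have "Top n i m \<Phi> w = \<Phi> w - (if w!i = hd w then Psum m i \<Phi> w else 0)" if "w \<in> Fib m f z" for w
      proof -
        have "map_option f (w!i) = Some b" using Fib_nth[OF that ilt] zb by simp
        then obtain b' where "w!i = Some b'" by auto
        then show ?thesis using gw[OF that] by (simp add: Top_def)
      qed
      then have "lpush (optset m) (map_option f) (Top n i m \<Phi>) z
          = (\<Sum>w\<in>Fib m f z. \<Phi> w) - (\<Sum>w\<in>Fib m f z. if w!i = hd w then Psum m i \<Phi> w else 0)"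
        using R by (simp add: sum_subtractf)
      also have "(\<Sum>w\<in>Fib m f z. if w!i = hd w then Psum m i \<Phi> w else 0)
          = (\<Sum>w\<in>{w \<in> Fib m f z. w!i = hd w}. \<Sum>y<m. \<Phi> (w[i:=Some y]))"
        unfolding Psum_def by (rule sum.inter_filter[OF fin_Fib, symmetric])
      also have "\<dots> = (if z!i = hd z then (\<Sum>w\<in>Rset m f i z. \<Phi> w) else 0)"
      proof (cases "z!i = hd z")
        case True then show ?thesis using Rb2[OF True ilt] i by simp
      next
        case False
        have "{w \<in> Fib m f z. w!i = hd w} = {}"
        proof (rule ccontr)
          assume "{w \<in> Fib m f z. w!i = hd w} \<noteq> {}"
          then obtain w where w: "w \<in> Fib m f z" "w!i = hd w" by auto
          have "z!i = map_option f (w!i)" using Fib_nth[OF w(1) ilt] by simp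
          also have "\<dots> = hd z" using w(2) Fib_hd[OF w(1) zne] by simp
          finally show False using False by simp
        qed
        then show ?thesis using False by (simp only: sum.empty if_False)
      qed
      finally have X: "lpush (optset m) (map_option f) (Top n i m \<Phi>) z = (\<Sum>w\<in>Fib m f z. \<Phi> w) - (if z!i = hd z then (\<Sum>w\<in>Rset m f i z. \<Phi> w) else 0)" .
      show ?thesis unfolding X using g zb PL lpushO_Fib[of m f \<Phi> z] by (simp add: Top_def)
    qed
  qed
qed


definition Emb :: "(nat list \<Rightarrow> 'k::field) \<Rightarrow> nat option list \<Rightarrow> 'k" where
  "Emb v z = (if None \<in> set z then 0 else v (map the z))"

definition Res :: "(nat option list \<Rightarrow> 'k::field) \<Rightarrow> nat list \<Rightarrow> 'k" where
  "Res \<Phi> xs = \<Phi> (map Some xs)"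

lemma map_Some_the: "None \<notin> set z \<Longrightarrow> map Some (map the z) = z"
  by (induct z) auto

lemma map_Some_tuples: "map Some xs \<in> tuples (optset m) r \<longleftrightarrow> xs \<in> tuples {..<m} r"
  by (auto simp: tuples_def)

lemma allSome_Fib: "Fib m f (map Some ys) = map Some ` {xs \<in> tuples {..<m} (length ys). map f xs = ys}"
proof (intro set_eqI iffI)
  fix w assume w: "w \<in> Fib m f (map Some ys)"
  then have mw: "map (map_option f) w = map Some ys" and wt: "w \<in> tuples (optset m) (length ys)"
    by (auto simp: Fib_def)
  have nN: "None \<notin> set w"
  proof
    assume "None \<in> set w"
    then have "map_option f None \<in> set (map (map_option f) w)" by (metis image_eqI list.set_map)
    then show False using mw by auto
  qed
  define xs where "xs = map the w"
  have wx: "w = map Some xs" using map_Some_the[OF nN] xs_def by simp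
  have "map (map_option f) (map Some xs) = map Some (map f xs)" by (induct xs) auto
  then have "map Some (map f xs) = map Some ys" using mw wx by (simp only:)
  then have "map f xs = ys" using inj_map_eq_map[of Some "map f xs" ys] by (simp only: inj_Some)
  moreover have "xs \<in> tuples {..<m} (length ys)" using wt wx map_Some_tuples by metis
  ultimately show "w \<in> map Some ` {xs \<in> tuples {..<m} (length ys). map f xs = ys}" using wx by blast
next
  fix w assume "w \<in> map Some ` {xs \<in> tuples {..<m} (length ys). map f xs = ys}"
  then obtain xs where xs: "w = map Some xs" "xs \<in> tuples {..<m} (length ys)" "map f xs = ys" by blast
  then show "w \<in> Fib m f (map Some ys)" using map_Some_tuples by (auto simp: Fib_def)
qed

lemma lpushO_allSome:
  "lpush (optset m) (map_option f) \<Phi> (map Some ys) = lpush {..<m} f (\<lambda>xs. \<Phi> (map Some xs)) ys"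
proof -
  have inj: "inj_on (map Some) A" for A :: "nat list set" by (simp add: inj_on_def)
  show ?thesis
    unfolding lpushO_Fib allSome_Fib sum.reindex[OF inj] by (simp add: lpush_def comp_def)
qed

lemma Res_nat: "Res (lpush (optset m) (map_option f) \<Phi>) = lpush {..<m} f (Res \<Phi>)"
  unfolding Res_def[abs_def] by (rule ext) (simp add: lpushO_allSome)

lemma Emb_sup:
  assumes v: "v \<in> PFA (Suc n) m" and ng: "\<not> good n m z" shows "Emb v z = 0"
proof (cases "None \<in> set z")
  case False
  have "map the z \<notin> tuples {..<m} (Suc n)"
  proof
    assume a: "map the z \<in> tuples {..<m} (Suc n)"
    then have zt: "z \<in> tuples (optset m) (Suc n)" using map_Some_tuples map_Some_the[OF False] by metis
    then have "z \<noteq> []" by (auto simp: tuples_def)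
    then have "hd z \<in> set z" by simp
    then have "hd z \<noteq> None" using False by metis
    then show False using ng zt by (simp add: good_def)
  qed
  then show ?thesis using v False by (simp add: Emb_def PFA_def)
qed (simp add: Emb_def)

lemma Emb_in:
  assumes v: "v \<in> PFA (Suc n) m" shows "Emb v \<in> Vsp n 0 m"
proof -
  have "Emb v z = 0" if "0 < i" "i \<le> n" "good n m z" "z!i = None" for i z
  proof -
    have "i < length z" using good_len[OF that(3)] that(2) by simp
    then have "None \<in> set z" using that(4) by (metis nth_mem)
    then show ?thesis by (simp add: Emb_def)
  qed
  then show ?thesis unfolding Vsp_def using Emb_sup[OF v] by auto
qed

lemma Res_in:
  assumes V: "\<Phi> \<in> Vsp n 0 m" shows "Res \<Phi> \<in> PFA (Suc n) m"
proof -
  have "Res \<Phi> xs = 0" if "xs \<notin> tuples {..<m} (Suc n)" for xs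
  proof -
    have "\<not> good n m (map Some xs)" using that map_Some_tuples by (auto simp: good_def)
    then show ?thesis using V_sup[OF V] by (simp add: Res_def)
  qed
  then show ?thesis by (simp add: PFA_def)
qed

lemma Res_Emb: "Res (Emb v) = v"
  by (rule ext) (simp add: Res_def Emb_def comp_def)

lemma Emb_Res:
  assumes V: "\<Phi> \<in> Vsp n 0 m" shows "Emb (Res \<Phi>) = \<Phi>"
proof
  fix z
  show "Emb (Res \<Phi>) z = \<Phi> z"
  proof (cases "None \<in> set z")
    case False then show ?thesis unfolding Emb_def Res_def using map_Some_the[OF False] by (simp del: map_map)
  next
    case True
    show ?thesis
    proof (cases "good n m z")
      case False then show ?thesis using V_sup[OF V False] True by (simp add: Emb_def)
    next
      case g: True
      obtain k where k: "k < length z" "z!k = None" using True by (metis in_set_conv_nth)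
      have "k \<noteq> 0"
      proof
        assume "k = 0"
        then have "hd z = None" using k hd_nth0[of z] by auto
        then show False using g by (simp add: good_def)
      qed
      moreover have "k \<le> n" using k good_len[OF g] by simp
      ultimately have "\<Phi> z = 0" using V_none[OF V _ _ k(2)] by simp
      then show ?thesis using True by (simp add: Emb_def)
    qed
  qed
qed

lemma lin_Emb: "lin_on V Emb"
  unfolding lin_on_def Emb_def by (auto simp: fun_eq_iff)

lemma Emb_nat:
  "Emb (lpush {..<m} f v) = lpush (optset m) (map_option f) (Emb v)"
proof
  fix z
  show "Emb (lpush {..<m} f v) z = lpush (optset m) (map_option f) (Emb v) z"
  proof (cases "None \<in> set z")
    case True
    have "Emb v w = 0" if w: "w \<in> Fib m f z" for w
    proof -
      obtain k where k: "k < length z" "z!k = None" using True by (metis in_set_conv_nth)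
      have "map_option f (w!k) = None" using Fib_nth[OF w k(1)] k(2) by simp
      then have "w!k = None" by simp
      moreover have "k < length w" using Fib_len[OF w] k by simp
      ultimately have "None \<in> set w" by (metis nth_mem)
      then show ?thesis by (simp add: Emb_def)
    qed
    then show ?thesis using True by (simp add: Emb_def lpushO_Fib)
  next
    case False
    define ys where "ys = map the z"
    have z: "z = map Some ys" using map_Some_the[OF False] ys_def by simp
    show ?thesis unfolding z lpushO_allSome by (simp add: Emb_def comp_def)
  qed
qed


fun eta :: "nat \<Rightarrow> nat \<Rightarrow> nat \<Rightarrow> (nat list \<Rightarrow> 'k::field) \<Rightarrow> nat option list \<Rightarrow> 'k" where
  "eta n 0 m v = Emb v"
| "eta n (Suc j) m v = Top n (Suc j) m (eta n j m v)"

lemma Top_step: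
  assumes jn: "Suc j \<le> n"
  shows "fa_nat (Vsp n j :: (nat option list, 'k::field) fa_obj) PPbarKbar_act (Vsp n (Suc j)) PPbarKbar_act (\<lambda>m. Top n (Suc j) m)
    \<and> (\<forall>m. bij_betw (Top n (Suc j) m) (Vsp n j m :: (nat option list \<Rightarrow> 'k) set) (Vsp n (Suc j) m))"
proof
  show "fa_nat (Vsp n j :: (nat option list, 'k::field) fa_obj) PPbarKbar_act (Vsp n (Suc j)) PPbarKbar_act (\<lambda>m. Top n (Suc j) m)"
    unfolding fa_nat_def
  proof (intro conjI allI impI ballI)
    fix m
    show "lin_on (Vsp n j m :: (nat option list \<Rightarrow> 'k) set) (Top n (Suc j) m)" by (rule lin_Top)
    show "Top n (Suc j) m ` (Vsp n j m :: (nat option list \<Rightarrow> 'k) set) \<subseteq> Vsp n (Suc j) m"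
      using Top_in[OF _ jn] by blast
  next
    fix m m' f and v :: "nat option list \<Rightarrow> 'k" assume f: "famap m m' f" and v: "v \<in> Vsp n j m"
    have sup: "\<forall>z. \<not> good n m z \<longrightarrow> v z = 0" using V_sup[OF v] by blast
    show "Top n (Suc j) m' (PPbarKbar_act m m' f v) = PPbarKbar_act m m' f (Top n (Suc j) m v)"
      unfolding PPbarKbar_act_def by (rule Top_nat[OF f sup]) (use jn in auto)
  qed
  show "\<forall>m. bij_betw (Top n (Suc j) m) (Vsp n j m :: (nat option list \<Rightarrow> 'k) set) (Vsp n (Suc j) m)"
  proof
    fix m
    show "bij_betw (Top n (Suc j) m) (Vsp n j m :: (nat option list \<Rightarrow> 'k) set) (Vsp n (Suc j) m)"
    proof (rule bij_betw_byWitness[where f'="Sop n (Suc j) m"])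
      show "\<forall>a\<in>Vsp n j m. Sop n (Suc j) m (Top n (Suc j) m a) = (a :: nat option list \<Rightarrow> 'k)"
        using Sop_Top[OF _ jn] by blast
      show "\<forall>a\<in>Vsp n (Suc j) m. Top n (Suc j) m (Sop n (Suc j) m a) = (a :: nat option list \<Rightarrow> 'k)"
        using Top_Sop[OF _ jn] by blast
      show "Top n (Suc j) m ` (Vsp n j m :: (nat option list \<Rightarrow> 'k) set) \<subseteq> Vsp n (Suc j) m"
        using Top_in[OF _ jn] by blast
      show "Sop n (Suc j) m ` (Vsp n (Suc j) m :: (nat option list \<Rightarrow> 'k) set) \<subseteq> Vsp n j m"
        using Sop_in[OF _ jn] by blast
    qed
  qed
qed

lemma Emb_step:
  "fa_nat (PFA (Suc n) :: (nat list, 'k::field) fa_obj) PFA_act (Vsp n 0) PPbarKbar_act (\<lambda>m. Emb)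
    \<and> (\<forall>m. bij_betw Emb (PFA (Suc n) m :: (nat list \<Rightarrow> 'k) set) (Vsp n 0 m))"
proof
  show "fa_nat (PFA (Suc n) :: (nat list, 'k::field) fa_obj) PFA_act (Vsp n 0) PPbarKbar_act (\<lambda>m. Emb)"
    unfolding fa_nat_def
  proof (intro conjI allI impI ballI)
    fix m
    show "lin_on (PFA (Suc n) m :: (nat list \<Rightarrow> 'k) set) Emb" by (rule lin_Emb)
    show "Emb ` (PFA (Suc n) m :: (nat list \<Rightarrow> 'k) set) \<subseteq> Vsp n 0 m" using Emb_in by blast
  next
    fix m m' f and v :: "nat list \<Rightarrow> 'k"
    show "Emb (PFA_act m m' f v) = PPbarKbar_act m m' f (Emb v)"
      unfolding PFA_act_def PPbarKbar_act_def by (rule Emb_nat)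
  qed
  show "\<forall>m. bij_betw Emb (PFA (Suc n) m :: (nat list \<Rightarrow> 'k) set) (Vsp n 0 m)"
  proof
    fix m
    show "bij_betw Emb (PFA (Suc n) m :: (nat list \<Rightarrow> 'k) set) (Vsp n 0 m)"
    proof (rule bij_betw_byWitness[where f'="Res"])
      show "\<forall>a\<in>PFA (Suc n) m. Res (Emb a) = (a :: nat list \<Rightarrow> 'k)" by (simp add: Res_Emb)
      show "\<forall>a\<in>Vsp n 0 m. Emb (Res a) = (a :: nat option list \<Rightarrow> 'k)" using Emb_Res by blast
      show "Emb ` (PFA (Suc n) m :: (nat list \<Rightarrow> 'k) set) \<subseteq> Vsp n 0 m" using Emb_in by blast
      show "Res ` (Vsp n 0 m :: (nat option list \<Rightarrow> 'k) set) \<subseteq> PFA (Suc n) m" using Res_in by blast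
    qed
  qed
qed

lemma eta_props:
  "j \<le> n \<Longrightarrow> fa_nat (PFA (Suc n) :: (nat list, 'k::field) fa_obj) PFA_act (Vsp n j) PPbarKbar_act (eta n j)
    \<and> (\<forall>m. bij_betw (eta n j m) (PFA (Suc n) m :: (nat list \<Rightarrow> 'k) set) (Vsp n j m))"
proof (induction j)
  case 0
  have "eta n 0 = (\<lambda>m. Emb)" by (rule ext)+ simp
  then show ?case using Emb_step by simp
next
  case (Suc j)
  have IH: "fa_nat (PFA (Suc n) :: (nat list, 'k::field) fa_obj) PFA_act (Vsp n j) PPbarKbar_act (eta n j)"
    "\<forall>m. bij_betw (eta n j m) (PFA (Suc n) m :: (nat list \<Rightarrow> 'k) set) (Vsp n j m)"
    using Suc by auto
  have S: "fa_nat (Vsp n j :: (nat option list, 'k::field) fa_obj) PPbarKbar_act (Vsp n (Suc j)) PPbarKbar_act (\<lambda>m. Top n (Suc j) m)"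
    "\<forall>m. bij_betw (Top n (Suc j) m) (Vsp n j m :: (nat option list \<Rightarrow> 'k) set) (Vsp n (Suc j) m)"
    using Top_step[OF Suc.prems] by auto
  have e: "eta n (Suc j) = (\<lambda>m v. Top n (Suc j) m (eta n j m v))" by (rule ext)+ simp
  have "bij_betw (eta n (Suc j) m) (PFA (Suc n) m :: (nat list \<Rightarrow> 'k) set) (Vsp n (Suc j) m)" for m
  proof -
    have em: "eta n (Suc j) m = Top n (Suc j) m \<circ> eta n j m" by (rule ext) simp
    show ?thesis unfolding em by (rule bij_betw_trans[OF IH(2)[rule_format, of m] S(2)[rule_format, of m]])
  qed
  moreover have "fa_nat (PFA (Suc n) :: (nat list, 'k::field) fa_obj) PFA_act (Vsp n (Suc j)) PPbarKbar_act (eta n (Suc j))"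
    unfolding e by (rule fa_nat_comp[OF IH(1) S(1)])
  ultimately show ?case by blast
qed

lemma iso1: "fa_isomorphic (PFA (Suc n) :: (nat list, 'k::field) fa_obj) PFA_act (PPbarKbar n) PPbarKbar_act"
proof -
  have V: "Vsp n n = (PPbarKbar n :: (nat option list, 'k) fa_obj)" by (rule ext) (rule Vsp_n)
  show ?thesis unfolding fa_isomorphic_def
    using eta_props[of n n, where 'k='k] V by auto
qed

lemma PPbar_unrestr:
  assumes v: "v \<in> PPbar n m" and i: "1 \<le> i" "i \<le> n"
  shows "(\<Sum>x<m. v (xs[i:=x])) = 0"
proof (cases "m = 0")
  case True then show ?thesis by simp
next
  case False
  show ?thesis
  proof (cases "xs[i:=0] \<in> tuples {..<m} (Suc n)")
    case True
    have h: "\<forall>xs\<in>tuples {..<m} (Suc n). (\<Sum>x<m. v (xs[i := x])) = 0" using v i by (auto simp: PPbar_def)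
    have "(\<Sum>x<m. v ((xs[i:=0])[i:=x])) = 0" using bspec[OF h True] .
    then show ?thesis by simp
  next
    case nt: False
    have "v (xs[i:=x]) = 0" if "x < m" for x
    proof -
      have "xs[i:=x] \<notin> tuples {..<m} (Suc n)"
        using nt tuples_update_swap[of xs i x "{..<m}" "Suc n" 0] False by auto
      then show ?thesis using v by (simp add: PPbar_def PFA_def)
    qed
    then show ?thesis by simp
  qed
qed

lemma Top_fix:
  assumes sup: "\<forall>z. \<not> good n m z \<longrightarrow> \<Phi> z = 0" and nz: "\<forall>z. good n m z \<longrightarrow> z!i = None \<longrightarrow> \<Phi> z = 0"
    and ps: "\<forall>z. Psum m i \<Phi> z = 0"
  shows "Top n i m \<Phi> = \<Phi>"
proof
  fix z show "Top n i m \<Phi> z = \<Phi> z"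
    using sup nz ps by (cases "good n m z"; cases "z!i = None") (auto simp: Top_def)
qed

lemma PPbar_PFA: "v \<in> PPbar n m \<Longrightarrow> v \<in> PFA (Suc n) m"
  by (simp add: PPbar_def)

lemma Emb_PPbar:
  assumes v: "v \<in> PPbar n m" and i: "1 \<le> i" "i \<le> n"
  shows "Psum m i (Emb v) z = 0"
proof (cases "i < length z")
  case False
  have "Emb v z = 0"
  proof (cases "None \<in> set z")
    case True then show ?thesis by (simp add: Emb_def)
  next
    case nN: False
    have "map the z \<notin> tuples {..<m} (Suc n)" using False i by (auto simp: tuples_def)
    then show ?thesis using PPbar_PFA[OF v] nN by (simp add: Emb_def PFA_def)
  qed
  then show ?thesis using False by (simp add: Psum_def list_update_beyond)
next
  case True
  show ?thesis
  proof (cases "\<exists>k<length z. k \<noteq> i \<and> z!k = None")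
    case True
    then obtain k where k: "k < length z" "k \<noteq> i" "z!k = None" by blast
    have "None \<in> set (z[i:=Some y])" for y
      using k by (metis length_list_update nth_list_update_neq nth_mem)
    then show ?thesis by (simp add: Psum_def Emb_def)
  next
    case nk: False
    have "None \<notin> set (z[i:=Some y])" for y
    proof
      assume "None \<in> set (z[i:=Some y])"
      then obtain k where k: "k < length z" "(z[i:=Some y])!k = None" by (auto simp: in_set_conv_nth)
      then show False using nk True by (cases "k = i") auto
    qed
    then have "Psum m i (Emb v) z = (\<Sum>y<m. v ((map the z)[i:=y]))"
      by (simp add: Psum_def Emb_def map_update)
    also have "\<dots> = 0" by (rule PPbar_unrestr[OF v i])
    finally show ?thesis .
  qed
qed

lemma eta_fix:
  assumes v: "v \<in> PPbar n m"
  shows "j \<le> n \<Longrightarrow> eta n j m v = Emb v"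
proof (induction j)
  case 0 then show ?case by simp
next
  case (Suc j)
  have sup: "\<forall>z. \<not> good n m z \<longrightarrow> Emb v z = 0" using Emb_sup[OF PPbar_PFA[OF v]] by blast
  have nz: "\<forall>z. good n m z \<longrightarrow> z!(Suc j) = None \<longrightarrow> Emb v z = 0"
  proof (intro allI impI)
    fix z assume g: "good n m z" and zn: "z!(Suc j) = None"
    have "Suc j < length z" using good_len[OF g] Suc.prems by simp
    then have "None \<in> set z" using zn by (metis nth_mem)
    then show "Emb v z = 0" by (simp add: Emb_def)
  qed
  have ps: "\<forall>z. Psum m (Suc j) (Emb v) z = 0" using Emb_PPbar[OF v, of "Suc j"] Suc.prems by simp
  show ?case using Suc Top_fix[OF sup nz ps] by simp
qed


definition pi :: "nat \<Rightarrow> nat \<Rightarrow> (nat list \<Rightarrow> 'k::field) \<Rightarrow> nat list \<Rightarrow> 'k" where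
  "pi n m v = Res (eta n n m v)"

lemma EP: "fa_nat (PFA (Suc n) :: (nat list, 'k::field) fa_obj) PFA_act (Vsp n n) PPbarKbar_act (eta n n)"
  using eta_props[of n n, where 'k='k] by blast

lemma pi_in:
  fixes v :: "nat list \<Rightarrow> 'k::field"
  assumes v: "v \<in> PFA (Suc n) m" shows "pi n m v \<in> PPbar n m"
proof -
  define \<Phi> where "\<Phi> = eta n n m v"
  have V: "\<Phi> \<in> Vsp n n m" using fan_img[OF EP v] \<Phi>_def by simp
  have 1: "pi n m v \<in> PFA (Suc n) m"
  proof -
    have "Res \<Phi> xs = 0" if "xs \<notin> tuples {..<m} (Suc n)" for xs
    proof -
      have "\<not> good n m (map Some xs)" using that map_Some_tuples by (auto simp: good_def)
      then show ?thesis using V_sup[OF V] by (simp add: Res_def)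
    qed
    then show ?thesis by (simp add: PFA_def pi_def \<Phi>_def)
  qed
  have 2: "(\<Sum>x<m. pi n m v (xs[i:=x])) = 0" if "i \<in> {1..n}" for i xs
  proof -
    have "(\<Sum>x<m. pi n m v (xs[i:=x])) = Psum m i \<Phi> (map Some xs)"
      by (simp add: pi_def Res_def Psum_def \<Phi>_def map_update)
    also have "\<dots> = 0" using V_psum[OF V] that by simp
    finally show ?thesis .
  qed
  show ?thesis using 1 2 by (simp add: PPbar_def)
qed

lemma pi_fix: "v \<in> PPbar n m \<Longrightarrow> pi n m v = v"
  using eta_fix[of v n m n] by (simp add: pi_def Res_Emb)

lemma pi_lin: "lin_on (PFA (Suc n) m :: (nat list \<Rightarrow> 'k::field) set) (pi n m)"
proof -
  have L: "lin_on (PFA (Suc n) m :: (nat list \<Rightarrow> 'k::field) set) (eta n n m)" using fan_lin[OF EP] .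
  show ?thesis unfolding lin_on_def
  proof (intro conjI ballI allI)
    fix u v :: "nat list \<Rightarrow> 'k" assume "u \<in> PFA (Suc n) m" "v \<in> PFA (Suc n) m"
    then show "pi n m (\<lambda>z. u z + v z) = (\<lambda>y. pi n m u y + pi n m v y)"
      using lin_add[OF L] by (simp add: pi_def Res_def[abs_def])
  next
    fix c and u :: "nat list \<Rightarrow> 'k" assume "u \<in> PFA (Suc n) m"
    then show "pi n m (\<lambda>z. c * u z) = (\<lambda>y. c * pi n m u y)"
      using lin_smult[OF L] by (simp add: pi_def Res_def[abs_def])
  qed
qed

lemma pi_nat:
  fixes v :: "nat list \<Rightarrow> 'k::field"
  assumes f: "famap m m' f" and v: "v \<in> PFA (Suc n) m"
  shows "pi n m' (PFA_act m m' f v) = PFA_act m m' f (pi n m v)"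
  unfolding pi_def using fan_nat[OF EP f v] by (simp add: PPbarKbar_act_def PFA_act_def Res_nat)

lemma pi_fanat: "fa_nat (PFA (Suc n) :: (nat list, 'k::field) fa_obj) PFA_act (PPbar n) PFA_act (pi n)"
  unfolding fa_nat_def using pi_lin pi_in pi_nat by blast

lemma PPbar_subsp: "subsp (PPbar n m :: (nat list \<Rightarrow> 'k::field) set)"
  unfolding subsp_def PPbar_def PFA_def
  by (auto simp: sum.distrib sum_distrib_left[symmetric])

lemma PPbar_module: "fa_module (PPbar n :: (nat list, 'k::field) fa_obj) PFA_act"
proof (rule fa_module_sub[OF fa_module_PFA])
  show "subsp (PPbar n m :: (nat list \<Rightarrow> 'k::field) set)" for m by (rule PPbar_subsp)
  show "PPbar n m \<subseteq> PFA (Suc n) m" for m by (auto simp: PPbar_def)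
  fix m m' f and v :: "nat list \<Rightarrow> 'k" assume f: "famap m m' f" and v: "v \<in> PPbar n m"
  have vP: "v \<in> PFA (Suc n) m" using PPbar_PFA[OF v] .
  have "PFA_act m m' f v = PFA_act m m' f (pi n m v)" using pi_fix[OF v] by simp
  also have "\<dots> = pi n m' (PFA_act m m' f v)" using pi_nat[OF f vP] by simp
  finally show "PFA_act m m' f v \<in> PPbar n m'"
    using pi_in[OF fam_img[OF fa_module_PFA f vP]] by simp
qed

lemma subsp_diff:
  assumes S: "subsp V" and u: "u \<in> V" and v: "v \<in> V"
  shows "(\<lambda>z. u z - v z) \<in> V"
proof -
  have "(\<lambda>z. u z + (\<lambda>z. (-1) * v z) z) \<in> V" by (rule subsp_add[OF S u subsp_smult[OF S v]])
  then show ?thesis by simp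
qed

lemma lin_diff:
  assumes L: "lin_on V T" and S: "subsp V" and u: "u \<in> V" and v: "v \<in> V"
  shows "T (\<lambda>z. u z - v z) = (\<lambda>y. T u y - T v y)"
proof -
  have "T (\<lambda>z. u z + (\<lambda>z. (-1) * v z) z) = (\<lambda>y. T u y + T (\<lambda>z. (-1) * v z) y)"
    by (rule lin_add[OF L u subsp_smult[OF S v]])
  moreover have "T (\<lambda>z. (-1) * v z) = (\<lambda>y. (-1) * T v y)" by (rule lin_smult[OF L v])
  ultimately show ?thesis by simp
qed

definition Cmp :: "nat \<Rightarrow> (nat list, 'k::field) fa_obj" where
  "Cmp n m = {v \<in> PFA (Suc n) m. pi n m v = (\<lambda>_. 0)}"

lemma pi_zero: "pi n m (\<lambda>_. 0) = (\<lambda>_. (0::'k::field))"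
  using lin_on_zero[OF pi_lin fam_subsp[OF fa_module_PFA]] by blast

lemma Cmp_module: "fa_module (Cmp n :: (nat list, 'k::field) fa_obj) PFA_act"
proof (rule fa_module_sub[OF fa_module_PFA])
  fix m
  have S: "subsp (PFA (Suc n) m :: (nat list \<Rightarrow> 'k) set)" by (rule fam_subsp[OF fa_module_PFA])
  have z: "(\<lambda>_. 0::'k) \<in> Cmp n m" using subsp_zero[OF S] pi_zero by (simp add: Cmp_def)
  have a: "(\<lambda>z. u z + v z) \<in> Cmp n m" if "u \<in> Cmp n m" "v \<in> Cmp n m" for u v :: "nat list \<Rightarrow> 'k"
  proof -
    have u: "u \<in> PFA (Suc n) m" "pi n m u = (\<lambda>_. 0)" and v: "v \<in> PFA (Suc n) m" "pi n m v = (\<lambda>_. 0)"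
      using that by (auto simp: Cmp_def)
    show ?thesis using subsp_add[OF S u(1) v(1)] lin_add[OF pi_lin u(1) v(1)] u(2) v(2) by (simp add: Cmp_def)
  qed
  have c: "(\<lambda>z. c * u z) \<in> Cmp n m" if "u \<in> Cmp n m" for u :: "nat list \<Rightarrow> 'k" and c
  proof -
    have u: "u \<in> PFA (Suc n) m" "pi n m u = (\<lambda>_. 0)" using that by (auto simp: Cmp_def)
    show ?thesis using subsp_smult[OF S u(1)] lin_smult[OF pi_lin u(1)] u(2) by (simp add: Cmp_def)
  qed
  show "subsp (Cmp n m :: (nat list \<Rightarrow> 'k::field) set)"
    unfolding subsp_def using z a c by blast
  show "Cmp n m \<subseteq> PFA (Suc n) m" by (auto simp: Cmp_def)
next
  fix m m' f and v :: "nat list \<Rightarrow> 'k" assume f: "famap m m' f" and v: "v \<in> Cmp n m"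
  have vP: "v \<in> PFA (Suc n) m" and p0: "pi n m v = (\<lambda>_. 0)" using v by (auto simp: Cmp_def)
  have "pi n m' (PFA_act m m' f v) = (\<lambda>_. 0)"
    using pi_nat[OF f vP] p0 by (simp add: PFA_act_def lpush_zero)
  then show "PFA_act m m' f v \<in> Cmp n m'" using fam_img[OF fa_module_PFA f vP] by (simp add: Cmp_def)
qed

lemma Cmp_decomp:
  "Cmp n m \<subseteq> PFA (Suc n) m \<and> PPbar n m \<inter> Cmp n m = {\<lambda>_. 0 :: 'k::field} \<and>
   {(\<lambda>xs. u xs + v xs) | u v. u \<in> PPbar n m \<and> v \<in> Cmp n m} = (PFA (Suc n) m :: (nat list \<Rightarrow> 'k) set)"
proof (intro conjI)
  have S: "subsp (PFA (Suc n) m :: (nat list \<Rightarrow> 'k) set)" by (rule fam_subsp[OF fa_module_PFA])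
  show "Cmp n m \<subseteq> PFA (Suc n) m" by (auto simp: Cmp_def)
  show "PPbar n m \<inter> Cmp n m = {\<lambda>_. 0 :: 'k}"
  proof (intro set_eqI iffI)
    fix v :: "nat list \<Rightarrow> 'k" assume "v \<in> PPbar n m \<inter> Cmp n m"
    then show "v \<in> {\<lambda>_. 0}" using pi_fix[of v n m] by (auto simp: Cmp_def)
  next
    fix v :: "nat list \<Rightarrow> 'k" assume "v \<in> {\<lambda>_. 0}"
    then show "v \<in> PPbar n m \<inter> Cmp n m"
      using subsp_zero[OF PPbar_subsp] subsp_zero[OF S] pi_zero by (auto simp: Cmp_def)
  qed
  show "{(\<lambda>xs. u xs + v xs) | u v. u \<in> PPbar n m \<and> v \<in> Cmp n m} = (PFA (Suc n) m :: (nat list \<Rightarrow> 'k) set)"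
  proof (intro set_eqI iffI)
    fix w :: "nat list \<Rightarrow> 'k" assume "w \<in> {(\<lambda>xs. u xs + v xs) | u v. u \<in> PPbar n m \<and> v \<in> Cmp n m}"
    then obtain u v where uv: "w = (\<lambda>xs. u xs + v xs)" "u \<in> PPbar n m" "v \<in> Cmp n m" by blast
    have "v \<in> PFA (Suc n) m" using uv(3) by (simp add: Cmp_def)
    then show "w \<in> PFA (Suc n) m" using subsp_add[OF S PPbar_PFA[OF uv(2)]] uv(1) by simp
  next
    fix w :: "nat list \<Rightarrow> 'k" assume w: "w \<in> PFA (Suc n) m"
    define u where "u = pi n m w"
    define v where "v = (\<lambda>z. w z - u z)"
    have uP: "u \<in> PPbar n m" using pi_in[OF w] u_def by simp
    have uF: "u \<in> PFA (Suc n) m" using PPbar_PFA[OF uP] .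
    have vF: "v \<in> PFA (Suc n) m" unfolding v_def using subsp_diff[OF S w uF] .
    have "pi n m v = (\<lambda>y. pi n m w y - pi n m u y)"
      unfolding v_def using lin_diff[OF pi_lin S w uF] .
    also have "\<dots> = (\<lambda>_. 0)" using pi_fix[OF uP] u_def by simp
    finally have "v \<in> Cmp n m" using vF by (simp add: Cmp_def)
    moreover have "w = (\<lambda>xs. u xs + v xs)" by (simp add: v_def)
    ultimately show "w \<in> {(\<lambda>xs. u xs + v xs) | u v. u \<in> PPbar n m \<and> v \<in> Cmp n m}" using uP by blast
  qed
qed

lemma PPbar_proj: "fa_projective TYPE('a) (PPbar n :: (nat list, 'k::field) fa_obj) PFA_act"
  unfolding fa_projective_def
proof (intro allI impI)
  fix G :: "('a,'k) fa_obj" and H :: "('a,'k) fa_obj" and AG AH p \<phi>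
  assume G: "fa_module G AG" and H: "fa_module H AH" and p: "fa_nat G AG H AH p"
    and s: "\<forall>m. p m ` G m = H m" and phi: "fa_nat (PPbar n) PFA_act H AH \<phi>"
  have phi': "fa_nat (PFA (Suc n)) PFA_act H AH (\<lambda>m v. \<phi> m (pi n m v))"
    by (rule fa_nat_comp[OF pi_fanat phi])
  obtain \<psi> where psi: "fa_nat (PFA (Suc n)) PFA_act G AG \<psi>" "\<forall>m. \<forall>v\<in>PFA (Suc n) m. p m (\<psi> m v) = \<phi> m (pi n m v)"
    using proj_PFA[OF G H p s phi'] by blast
  have "fa_nat (PPbar n) PFA_act G AG \<psi>"
    by (rule fa_nat_restrict[OF psi(1)]) (auto simp: PPbar_def)
  moreover have "\<forall>m. \<forall>v\<in>PPbar n m. p m (\<psi> m v) = \<phi> m v"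
    using psi(2) pi_fix PPbar_PFA by metis
  ultimately show "\<exists>\<psi>. fa_nat (PPbar n) PFA_act G AG \<psi> \<and> (\<forall>m. \<forall>v\<in>PPbar n m. p m (\<psi> m v) = \<phi> m v)"
    by blast
qed


fun expand :: "bool list \<Rightarrow> 'a list \<Rightarrow> 'a option list" where
  "expand [] xs = []"
| "expand (b#bs) xs = (if b then Some (hd xs) # expand bs (tl xs) else None # expand bs xs)"

definition cnt :: "bool list \<Rightarrow> nat" where "cnt bs = length (filter id bs)"
definition compress :: "'a option list \<Rightarrow> 'a list" where "compress z = map the (filter (\<lambda>a. a \<noteq> None) z)"
definition pat :: "'a option list \<Rightarrow> bool list" where "pat z = map (\<lambda>a. a \<noteq> None) z"

lemma cnt_simps[simp]: "cnt [] = 0" "cnt (True#bs) = Suc (cnt bs)" "cnt (False#bs) = cnt bs"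
  by (auto simp: cnt_def)

lemma E1[simp]: "length (expand bs xs) = length bs"
  by (induct bs arbitrary: xs) auto

lemma E2: "length xs = cnt bs \<Longrightarrow> compress (expand bs xs) = xs"
proof (induct bs arbitrary: xs)
  case Nil then show ?case by (simp add: compress_def)
next
  case (Cons b bs)
  show ?case
  proof (cases b)
    case True
    then obtain x xs' where xs: "xs = x # xs'" using Cons.prems by (cases xs) auto
    then show ?thesis using Cons True by (simp add: compress_def)
  next
    case False then show ?thesis using Cons by (simp add: compress_def)
  qed
qed

lemma E3: "length xs = cnt bs \<Longrightarrow> pat (expand bs xs) = bs"
proof (induct bs arbitrary: xs)
  case Nil then show ?case by (simp add: pat_def)
next
  case (Cons b bs)
  show ?case
  proof (cases b)
    case True
    then obtain x xs' where xs: "xs = x # xs'" using Cons.prems by (cases xs) auto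
    then show ?thesis using Cons True by (simp add: pat_def)
  next
    case False then show ?thesis using Cons by (simp add: pat_def)
  qed
qed

lemma E4: "expand (pat z) (compress z) = z"
proof (induct z)
  case Nil then show ?case by (simp add: pat_def compress_def)
next
  case (Cons a z)
  then show ?case by (cases a) (auto simp: pat_def compress_def)
qed

lemma len_compress: "length (compress z) = cnt (pat z)"
  by (simp add: compress_def cnt_def pat_def filter_map comp_def)

lemma len_pat[simp]: "length (pat z) = length z" by (simp add: pat_def)

lemma E5: "length xs = cnt bs \<Longrightarrow> map (map_option f) (expand bs xs) = expand bs (map f xs)"
proof (induct bs arbitrary: xs)
  case Nil then show ?case by simp
next
  case (Cons b bs)
  show ?case
  proof (cases b)
    case True
    then obtain x xs' where xs: "xs = x # xs'" using Cons.prems by (cases xs) auto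
    then show ?thesis using Cons True by simp
  next
    case False then show ?thesis using Cons by simp
  qed
qed

lemma E6: "length xs = cnt bs \<Longrightarrow> set (expand bs xs) - {None} = Some ` set xs"
proof (induct bs arbitrary: xs)
  case Nil then show ?case by simp
next
  case (Cons b bs)
  show ?case
  proof (cases b)
    case True
    then obtain x xs' where xs: "xs = x # xs'" using Cons.prems by (cases xs) auto
    then show ?thesis using Cons True by auto
  next
    case False then show ?thesis using Cons by auto
  qed
qed

lemma E6t:
  assumes "length xs = cnt bs"
  shows "expand bs xs \<in> tuples (optset m) (length bs) \<longleftrightarrow> xs \<in> tuples {..<m} (length xs)"
proof -
  have "set (expand bs xs) \<subseteq> optset m \<longleftrightarrow> set (expand bs xs) - {None} \<subseteq> optset m"
    by (auto simp: optset_def)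
  also have "\<dots> \<longleftrightarrow> Some ` set xs \<subseteq> optset m" using E6[OF assms] by simp
  also have "\<dots> \<longleftrightarrow> set xs \<subseteq> {..<m}" by (auto simp: optset_def)
  finally show ?thesis by (simp add: tuples_def)
qed

lemma E7:
  "length xs = cnt bs \<Longrightarrow> r < length xs \<Longrightarrow>
   \<exists>p<length bs. r \<le> p \<and> (\<forall>x. expand bs (xs[r:=x]) = (expand bs xs)[p := Some x])"
proof (induct bs arbitrary: xs r)
  case Nil then show ?case by simp
next
  case (Cons b bs)
  show ?case
  proof (cases b)
    case True
    then obtain x0 xs' where xs: "xs = x0 # xs'" using Cons.prems by (cases xs) auto
    show ?thesis
    proof (cases r)
      case 0 then show ?thesis using True xs by auto
    next
      case (Suc r')
      obtain p' where p': "p' < length bs" "r' \<le> p'" "\<forall>x. expand bs (xs'[r':=x]) = (expand bs xs')[p' := Some x]"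
        using Cons.hyps[of xs' r'] Cons.prems xs Suc True by auto
      show ?thesis using p' xs Suc True by (intro exI[of _ "Suc p'"]) auto
    qed
  next
    case False
    obtain p' where p': "p' < length bs" "r \<le> p'" "\<forall>x. expand bs (xs[r:=x]) = (expand bs xs)[p' := Some x]"
      using Cons.hyps[of xs r] Cons.prems False by auto
    show ?thesis using p' False by (intro exI[of _ "Suc p'"]) auto
  qed
qed

lemma E8:
  "length xs = cnt bs \<Longrightarrow> p < length bs \<Longrightarrow> bs!p \<Longrightarrow>
   \<exists>r<length xs. (hd bs \<and> 0 < p \<longrightarrow> 0 < r) \<and> (\<forall>x. expand bs (xs[r:=x]) = (expand bs xs)[p := Some x])"
proof (induct bs arbitrary: xs p)
  case Nil then show ?case by simp
next
  case (Cons b bs)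
  show ?case
  proof (cases b)
    case True
    then obtain x0 xs' where xs: "xs = x0 # xs'" using Cons.prems by (cases xs) auto
    show ?thesis
    proof (cases p)
      case 0 then show ?thesis using True xs by (intro exI[of _ 0]) auto
    next
      case (Suc p')
      obtain r' where r': "r' < length xs'" "\<forall>x. expand bs (xs'[r':=x]) = (expand bs xs')[p' := Some x]"
        using Cons.hyps[of xs' p'] Cons.prems xs Suc True by auto
      show ?thesis using r' xs Suc True by (intro exI[of _ "Suc r'"]) auto
    qed
  next
    case False
    then obtain p' where Suc: "p = Suc p'" using Cons.prems by (cases p) auto
    obtain r where r: "r < length xs" "\<forall>x. expand bs (xs[r:=x]) = (expand bs xs)[p' := Some x]"
      using Cons.hyps[of xs p'] Cons.prems Suc False by auto
    show ?thesis using r Suc False by (intro exI[of _ r]) auto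
  qed
qed

lemma pat_nth: "i < length z \<Longrightarrow> pat z ! i = (z!i \<noteq> None)"
  by (simp add: pat_def)

lemma pat_map_option: "pat (map (map_option f) z) = pat z"
  by (simp add: pat_def comp_def)


definition msk :: "nat \<Rightarrow> nat set \<Rightarrow> bool list" where
  "msk n S = True # map (\<lambda>i. i \<in> S) [1..<Suc n]"

lemma msk_len[simp]: "length (msk n S) = Suc n" by (simp add: msk_def)
lemma msk_nth0[simp]: "msk n S ! 0 = True" by (simp add: msk_def)
lemma msk_hd[simp]: "hd (msk n S) = True" by (simp add: msk_def)
lemma msk_nth: "1 \<le> i \<Longrightarrow> i \<le> n \<Longrightarrow> msk n S ! i = (i \<in> S)"
  by (cases i) (auto simp del: upt_Suc simp: msk_def nth_map nth_upt)

lemma cnt_msk: assumes "S \<subseteq> {1..n}" shows "cnt (msk n S) = Suc (card S)"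
proof -
  have "cnt (msk n S) = Suc (length (filter (\<lambda>i. i \<in> S) [1..<Suc n]))"
    by (simp add: msk_def cnt_def filter_map comp_def)
  also have "length (filter (\<lambda>i. i \<in> S) [1..<Suc n]) = card (set (filter (\<lambda>i. i \<in> S) [1..<Suc n]))"
    by (rule distinct_card[symmetric]) simp
  also have "set (filter (\<lambda>i. i \<in> S) [1..<Suc n]) = S" using assms by auto
  finally show ?thesis .
qed

definition SetOf :: "nat \<Rightarrow> nat option list \<Rightarrow> nat set" where
  "SetOf n z = {i \<in> {1..n}. z!i \<noteq> None}"

lemma SetOf_sub: "SetOf n z \<subseteq> {1..n}" by (auto simp: SetOf_def)

lemma pat_good:
  assumes l: "length z = Suc n" and h: "hd z \<noteq> None"
  shows "pat z = msk n (SetOf n z)"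
proof (rule nth_equalityI)
  show "length (pat z) = length (msk n (SetOf n z))" using l by simp
  fix i assume i: "i < length (pat z)"
  show "pat z ! i = msk n (SetOf n z) ! i"
  proof (cases i)
    case 0
    have "z \<noteq> []" using l by auto
    then show ?thesis using 0 h pat_nth[of 0 z] hd_nth0[of z] by simp
  next
    case (Suc i')
    then show ?thesis using i l pat_nth[of i z] msk_nth[of i n] by (simp add: SetOf_def)
  qed
qed

lemma SetOf_expand:
  assumes S: "S \<subseteq> {1..n}" and l: "length xs = Suc (card S)"
  shows "SetOf n (expand (msk n S) xs) = S"
proof -
  have p: "pat (expand (msk n S) xs) = msk n S" using E3[of xs "msk n S"] cnt_msk[OF S] l by simp
  have "expand (msk n S) xs ! i \<noteq> None \<longleftrightarrow> i \<in> S" if "1 \<le> i" "i \<le> n" for i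
    using pat_nth[of i "expand (msk n S) xs"] p msk_nth[OF that] that by simp
  then show ?thesis using S by (auto simp: SetOf_def)
qed

definition Sets :: "nat \<Rightarrow> nat \<Rightarrow> nat set set" where
  "Sets n k = {S. S \<subseteq> {1..n} \<and> card S = k}"

lemma fin_Sets: "finite (Sets n k)"
  unfolding Sets_def by (rule finite_subset[of _ "Pow {1..n}"]) auto

lemma card_Sets: "card (Sets n k) = n choose k"
  unfolding Sets_def using n_subsets[of "{1..n}" k] by simp

definition enum :: "nat \<Rightarrow> nat \<Rightarrow> nat \<Rightarrow> nat set" where
  "enum n k = (SOME h. bij_betw h {0..<n choose k} (Sets n k))"

lemma enum_bij: "bij_betw (enum n k) {0..<n choose k} (Sets n k)"
proof -
  have "\<exists>h. bij_betw h {0..<n choose k} (Sets n k)"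
    using ex_bij_betw_nat_finite[OF fin_Sets[of n k]] card_Sets by simp
  then show ?thesis unfolding enum_def by (rule someI_ex)
qed

definition uenum :: "nat \<Rightarrow> nat \<Rightarrow> nat set \<Rightarrow> nat" where
  "uenum n k S = the_inv_into {0..<n choose k} (enum n k) S"

lemma enum_in: "j < n choose k \<Longrightarrow> enum n k j \<in> Sets n k"
  using enum_bij[of n k] by (auto simp: bij_betw_def)

lemma uenum_enum: "j < n choose k \<Longrightarrow> uenum n k (enum n k j) = j"
  using enum_bij[of n k] unfolding uenum_def bij_betw_def by (auto intro: the_inv_into_f_f)

lemma uenum_in: "S \<in> Sets n k \<Longrightarrow> uenum n k S < n choose k \<and> enum n k (uenum n k S) = S"
proof -
  assume S: "S \<in> Sets n k"
  have b: "inj_on (enum n k) {0..<n choose k}" "enum n k ` {0..<n choose k} = Sets n k"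
    using enum_bij[of n k] by (auto simp: bij_betw_def)
  have "uenum n k S \<in> {0..<n choose k}" unfolding uenum_def
    using the_inv_into_into[OF b(1) _ subset_refl, of S] S b(2) by auto
  moreover have "enum n k (uenum n k S) = S" unfolding uenum_def
    using f_the_inv_into_f[OF b(1), of S] S b(2) by auto
  ultimately show ?thesis by simp
qed

definition zeta :: "nat \<Rightarrow> nat \<Rightarrow> (nat option list \<Rightarrow> 'k::field) \<Rightarrow> nat \<times> nat \<times> nat list \<Rightarrow> 'k" where
  "zeta n m \<Phi> = (\<lambda>(k,j,xs). if k \<le> n \<and> j < n choose k \<and> length xs = Suc k
      then \<Phi> (expand (msk n (enum n k j)) xs) else 0)"

definition zinv :: "nat \<Rightarrow> nat \<Rightarrow> (nat \<times> nat \<times> nat list \<Rightarrow> 'k::field) \<Rightarrow> nat option list \<Rightarrow> 'k" where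
  "zinv n m \<Psi> z = (if good n m z then \<Psi> (card (SetOf n z), uenum n (card (SetOf n z)) (SetOf n z), compress z) else 0)"

lemma card_le: "S \<subseteq> {1..n} \<Longrightarrow> card S \<le> n"
  using card_mono[of "{1..n}" S] by simp

lemma Sets_mem: "S \<in> Sets n k \<longleftrightarrow> S \<subseteq> {1..n} \<and> card S = k" by (simp add: Sets_def)


lemma enum_props:
  assumes "j < n choose k"
  shows "enum n k j \<subseteq> {1..n}" "card (enum n k j) = k"
  using enum_in[OF assms] by (auto simp: Sets_def)

lemma zeta_in:
  fixes \<Phi> :: "nat option list \<Rightarrow> 'k::field"
  assumes P: "\<Phi> \<in> PPbarKbar n m" shows "zeta n m \<Phi> \<in> DSum n m"
proof -
  have V: "\<Phi> \<in> Vsp n n m" using P Vsp_n by blast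
  have 1: "zeta n m \<Phi> (k, j, xs) = 0" if "n < k \<or> n choose k \<le> j" for k j xs
    using that by (auto simp: zeta_def)
  have 2: "(\<lambda>xs. zeta n m \<Phi> (k, j, xs)) \<in> PPbar k m" if kn: "k \<le> n" and jC: "j < n choose k" for k j
  proof -
    define S where "S = enum n k j"
    have S: "S \<subseteq> {1..n}" "card S = k" using enum_props[OF jC] S_def by auto
    define bs where "bs = msk n S"
    have cb: "cnt bs = Suc k" using cnt_msk[OF S(1)] S(2) bs_def by simp
    have lb: "length bs = Suc n" by (simp add: bs_def)
    have sl: "zeta n m \<Phi> (k, j, xs) = (if length xs = Suc k then \<Phi> (expand bs xs) else 0)" for xs
      using kn jC by (simp add: zeta_def bs_def S_def)
    have a: "(\<lambda>xs. zeta n m \<Phi> (k, j, xs)) \<in> PFA (Suc k) m"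
    proof -
      have "zeta n m \<Phi> (k, j, xs) = 0" if "xs \<notin> tuples {..<m} (Suc k)" for xs
      proof (cases "length xs = Suc k")
        case True
        have "expand bs xs \<notin> tuples (optset m) (Suc n)" using E6t[of xs bs m] True cb lb that by simp
        then have "\<not> good n m (expand bs xs)" by (simp add: good_def)
        then show ?thesis using sl V_sup[OF V] True by simp
      qed (simp add: sl)
      then show ?thesis by (simp add: PFA_def)
    qed
    have b: "(\<Sum>x<m. zeta n m \<Phi> (k, j, xs[i:=x])) = 0" if i: "i \<in> {1..k}" and xs: "xs \<in> tuples {..<m} (Suc k)" for i xs
    proof -
      have lx: "length xs = Suc k" using xs by (simp add: tuples_def)
      obtain p where p: "p < length bs" "i \<le> p" "\<forall>x. expand bs (xs[i:=x]) = (expand bs xs)[p := Some x]"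
        using E7[of xs bs i] lx cb i by auto
      have "(\<Sum>x<m. zeta n m \<Phi> (k, j, xs[i:=x])) = Psum m p \<Phi> (expand bs xs)"
        using sl lx p(3) by (simp add: Psum_def)
      also have "\<dots> = 0" using V_psum[OF V, of p] p i lb by simp
      finally show ?thesis .
    qed
    show ?thesis using a b by (simp add: PPbar_def)
  qed
  show ?thesis unfolding DSum_def using 1 2 by blast
qed

lemma SetOf_upd:
  assumes "i < length z" shows "SetOf n (z[i:=Some x]) = SetOf n (z[i:=Some y])"
  using assms by (auto simp: SetOf_def nth_list_update)

lemma DSum_slice: "\<Psi> \<in> DSum n m \<Longrightarrow> k \<le> n \<Longrightarrow> j < n choose k \<Longrightarrow> (\<lambda>xs. \<Psi> (k, j, xs)) \<in> PPbar k m"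
  by (simp add: DSum_def)

lemma DSum_zero: "\<Psi> \<in> DSum n m \<Longrightarrow> n < k \<or> n choose k \<le> j \<Longrightarrow> \<Psi> (k, j, xs) = 0"
  unfolding DSum_def by blast

lemma zinv_in:
  fixes \<Psi> :: "nat \<times> nat \<times> nat list \<Rightarrow> 'k::field"
  assumes D: "\<Psi> \<in> DSum n m" shows "zinv n m \<Psi> \<in> PPbarKbar n m"
proof -
  have sup: "\<forall>z. \<not> good n m z \<longrightarrow> zinv n m \<Psi> z = 0" by (simp add: zinv_def)
  have ps: "Psum m i (zinv n m \<Psi>) z = 0" if i: "1 \<le> i" "i \<le> n" for i z
  proof (cases "m = 0")
    case True then show ?thesis by (simp add: Psum_def)
  next
    case m0: False
    show ?thesis
    proof (cases "good n m (z[i:=None])")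
      case False then show ?thesis using Psum_bad[OF False _ sup] i by simp
    next
      case True
      have gx: "good n m (z[i:=Some x])" if "x < m" for x using good_upd_swap[OF True, of "Some x"] that i by simp
      define z0 where "z0 = z[i:=Some 0]"
      have g0: "good n m z0" using gx m0 z0_def by simp
      have lz: "length z = Suc n" using good_len[OF True] by simp
      have il: "i < length z" using lz i by simp
      define S where "S = SetOf n z0"
      define k where "k = card S"
      define j where "j = uenum n k S"
      have Ssub: "S \<subseteq> {1..n}" using SetOf_sub S_def by simp
      have kn: "k \<le> n" using card_le[OF Ssub] k_def by simp
      have SS: "S \<in> Sets n k" using Ssub k_def by (simp add: Sets_def)
      have jC: "j < n choose k" using uenum_in[OF SS] j_def by simp
      define bs where "bs = msk n S"
      have pz0: "pat z0 = bs" using pat_good[of z0 n] g0 good_len[OF g0] bs_def S_def by (simp add: good_def)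
      define ys0 where "ys0 = compress z0"
      have ly: "length ys0 = Suc k" using len_compress[of z0] pz0 cnt_msk[OF Ssub] ys0_def bs_def k_def by simp
      have cb: "cnt bs = Suc k" using cnt_msk[OF Ssub] bs_def k_def by simp
      have z0e: "expand bs ys0 = z0" using E4[of z0] pz0 ys0_def by simp
      have bi: "bs ! i" using il i z0_def bs_def msk_nth[OF i, of S] by (simp add: S_def SetOf_def)
      obtain r where r: "r < length ys0" "0 < r" "\<forall>x. expand bs (ys0[r:=x]) = (expand bs ys0)[i := Some x]"
        using E8[of ys0 bs i] ly cb bi i lz by (auto simp: bs_def)
      have zx: "zinv n m \<Psi> (z[i:=Some x]) = \<Psi> (k, j, ys0[r:=x])" if "x < m" for x
      proof -
        have e: "z[i:=Some x] = expand bs (ys0[r:=x])" using r(3) z0e z0_def by simp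
        have c: "compress (z[i:=Some x]) = ys0[r:=x]" using e E2[of "ys0[r:=x]" bs] ly cb by simp
        have so: "SetOf n (z[i:=Some x]) = S" using SetOf_upd[OF il] S_def z0_def by metis
        show ?thesis using gx[OF that] c so by (simp add: zinv_def k_def j_def)
      qed
      have "Psum m i (zinv n m \<Psi>) z = (\<Sum>x<m. \<Psi> (k, j, ys0[r:=x]))" using zx by (simp add: Psum_def)
      also have "\<dots> = 0" using PPbar_unrestr[OF DSum_slice[OF D kn jC], of r] r ly by simp
      finally show ?thesis .
    qed
  qed
  have "zinv n m \<Psi> \<in> Vsp n n m" unfolding Vsp_def using sup ps by auto
  then show ?thesis using Vsp_n by blast
qed


lemma zinv_zeta:
  fixes \<Phi> :: "nat option list \<Rightarrow> 'k::field"
  assumes P: "\<Phi> \<in> PPbarKbar n m" shows "zinv n m (zeta n m \<Phi>) = \<Phi>"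
proof
  fix z
  have V: "\<Phi> \<in> Vsp n n m" using P Vsp_n by blast
  show "zinv n m (zeta n m \<Phi>) z = \<Phi> z"
  proof (cases "good n m z")
    case False then show ?thesis using V_sup[OF V False] by (simp add: zinv_def)
  next
    case g: True
    define S where "S = SetOf n z"
    define k where "k = card S"
    define j where "j = uenum n k S"
    have Ssub: "S \<subseteq> {1..n}" using SetOf_sub S_def by simp
    have kn: "k \<le> n" using card_le[OF Ssub] k_def by simp
    have SS: "S \<in> Sets n k" using Ssub k_def by (simp add: Sets_def)
    have jC: "j < n choose k" and ej: "enum n k j = S" using uenum_in[OF SS] j_def by auto
    have pz: "pat z = msk n S" using pat_good[of z n] g good_len[OF g] S_def by (simp add: good_def)
    have lc: "length (compress z) = Suc k" using len_compress[of z] pz cnt_msk[OF Ssub] k_def by simp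
    have "zeta n m \<Phi> (k, j, compress z) = \<Phi> z"
      using kn jC lc ej E4[of z] pz by (simp add: zeta_def)
    then show ?thesis using g by (simp add: zinv_def S_def[symmetric] k_def[symmetric] j_def[symmetric])
  qed
qed

lemma hd_expand_True: "xs \<noteq> [] \<Longrightarrow> hd (expand (True # bs) xs) = Some (hd xs)"
  by simp

lemma zeta_zinv:
  fixes \<Psi> :: "nat \<times> nat \<times> nat list \<Rightarrow> 'k::field"
  assumes D: "\<Psi> \<in> DSum n m" shows "zeta n m (zinv n m \<Psi>) = \<Psi>"
proof
  fix t :: "nat \<times> nat \<times> nat list"
  obtain k j xs where t: "t = (k, j, xs)" by (cases t) auto
  show "zeta n m (zinv n m \<Psi>) t = \<Psi> t"
  proof (cases "k \<le> n \<and> j < n choose k \<and> length xs = Suc k")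
    case False
    have "\<Psi> (k, j, xs) = 0"
    proof (cases "k \<le> n \<and> j < n choose k")
      case True
      then have "length xs \<noteq> Suc k" using False by simp
      then have "xs \<notin> tuples {..<m} (Suc k)" by (simp add: tuples_def)
      then show ?thesis using DSum_slice[OF D] True by (simp add: PPbar_def PFA_def)
    next
      case False then show ?thesis using DSum_zero[OF D] by auto
    qed
    moreover have "zeta n m (zinv n m \<Psi>) t = 0" unfolding t zeta_def prod.case if_not_P[OF False] ..
    ultimately show ?thesis using t by simp
  next
    case True
    then have kn: "k \<le> n" and jC: "j < n choose k" and lx: "length xs = Suc k" by auto
    define S where "S = enum n k j"
    have S: "S \<subseteq> {1..n}" "card S = k" using enum_props[OF jC] S_def by auto
    define bs where "bs = msk n S"
    have cb: "cnt bs = Suc k" using cnt_msk[OF S(1)] S(2) bs_def by simp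
    define e where "e = expand bs xs"
    have ze: "zeta n m (zinv n m \<Psi>) t = zinv n m \<Psi> e" using True t by (simp add: zeta_def e_def bs_def S_def)
    have xne: "xs \<noteq> []" using lx by auto
    have he: "hd e \<noteq> None" using hd_expand_True[OF xne] by (simp add: e_def bs_def msk_def)
    have ge: "good n m e \<longleftrightarrow> xs \<in> tuples {..<m} (Suc k)"
      using E6t[of xs bs m] lx cb he by (simp add: good_def e_def bs_def)
    show ?thesis
    proof (cases "xs \<in> tuples {..<m} (Suc k)")
      case True
      have so: "SetOf n e = S" using SetOf_expand[OF S(1)] lx S(2) by (simp add: e_def bs_def)
      have ce: "compress e = xs" using E2[of xs bs] lx cb by (simp add: e_def)
      have "zinv n m \<Psi> e = \<Psi> (k, j, xs)"
        using ge True so ce S(2) uenum_enum[OF jC] by (simp add: zinv_def S_def)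
      then show ?thesis using ze t by simp
    next
      case False
      have "\<Psi> (k, j, xs) = 0" using DSum_slice[OF D kn jC] False by (simp add: PPbar_def PFA_def)
      then show ?thesis using ze t ge False by (simp add: zinv_def)
    qed
  qed
qed

lemma lin_zeta: "lin_on V (zeta n m)"
  unfolding lin_on_def zeta_def by (auto simp: fun_eq_iff)

lemma Fib_expand:
  assumes ly: "length ys = cnt bs"
  shows "Fib m f (expand bs ys) = expand bs ` {xs \<in> tuples {..<m} (length ys). map f xs = ys}"
proof (intro set_eqI iffI)
  fix w assume w: "w \<in> Fib m f (expand bs ys)"
  have mw: "map (map_option f) w = expand bs ys" and wt: "w \<in> tuples (optset m) (length bs)"
    using w by (auto simp: Fib_def)
  have pw: "pat w = bs" using pat_map_option[of f w] mw E3[OF ly] by simp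
  define xs where "xs = compress w"
  have lx: "length xs = cnt bs" using len_compress[of w] pw xs_def by simp
  have we: "w = expand bs xs" using E4[of w] pw xs_def by simp
  have "expand bs (map f xs) = map (map_option f) w" using E5[OF lx, of f] we by simp
  then have "expand bs (map f xs) = expand bs ys" using mw by simp
  then have "compress (expand bs (map f xs)) = compress (expand bs ys)" by simp
  then have mf: "map f xs = ys" using E2[of "map f xs" bs] E2[OF ly] lx by simp
  have "xs \<in> tuples {..<m} (length xs)" using E6t[OF lx, of m] wt we by simp
  then show "w \<in> expand bs ` {xs \<in> tuples {..<m} (length ys). map f xs = ys}"
    using we mf lx ly by auto
next
  fix w assume "w \<in> expand bs ` {xs \<in> tuples {..<m} (length ys). map f xs = ys}"
  then obtain xs where xs: "w = expand bs xs" "xs \<in> tuples {..<m} (length ys)" "map f xs = ys" by blast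
  have lx: "length xs = cnt bs" using xs(2) ly by (simp add: tuples_def)
  have "w \<in> tuples (optset m) (length bs)" using E6t[OF lx, of m] xs(1,2) lx ly by (simp add: tuples_def)
  moreover have "map (map_option f) w = expand bs ys" using E5[OF lx, where f=f] xs(1,3) by simp
  ultimately show "w \<in> Fib m f (expand bs ys)" by (simp add: Fib_def)
qed

lemma zeta_nat:
  fixes \<Phi> :: "nat option list \<Rightarrow> 'k::field"
  shows "zeta n m' (PPbarKbar_act m m' f \<Phi>) = DSum_act m m' f (zeta n m \<Phi>)"
proof
  fix t :: "nat \<times> nat \<times> nat list"
  obtain k j ys where t: "t = (k, j, ys)" by (cases t) auto
  have R: "DSum_act m m' f (zeta n m \<Phi>) t
      = (\<Sum>xs\<in>{xs \<in> tuples {..<m} (length ys). map f xs = ys}. zeta n m \<Phi> (k, j, xs))"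
    unfolding t DSum_act_def lpush_def prod.case ..
  show "zeta n m' (PPbarKbar_act m m' f \<Phi>) t = DSum_act m m' f (zeta n m \<Phi>) t"
  proof (cases "k \<le> n \<and> j < n choose k \<and> length ys = Suc k")
    case False
    have "zeta n m \<Phi> (k, j, xs) = 0" if "xs \<in> {xs \<in> tuples {..<m} (length ys). map f xs = ys}" for xs
    proof -
      have "length xs = length ys" using that by (simp add: tuples_def)
      then have "\<not> (k \<le> n \<and> j < n choose k \<and> length xs = Suc k)" using False by simp
      then show ?thesis unfolding zeta_def prod.case by (rule if_not_P)
    qed
    then have "DSum_act m m' f (zeta n m \<Phi>) t = 0" using R by simp
    moreover have "zeta n m' (PPbarKbar_act m m' f \<Phi>) t = 0" unfolding t zeta_def prod.case if_not_P[OF False] ..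
    ultimately show ?thesis by simp
  next
    case True
    then have kn: "k \<le> n" and jC: "j < n choose k" and ly: "length ys = Suc k" by auto
    define S where "S = enum n k j"
    have S: "S \<subseteq> {1..n}" "card S = k" using enum_props[OF jC] S_def by auto
    define bs where "bs = msk n S"
    have cb: "cnt bs = Suc k" using cnt_msk[OF S(1)] S(2) bs_def by simp
    define A where "A = {xs \<in> tuples {..<m} (length ys). map f xs = ys}"
    have inj: "inj_on (expand bs) A"
    proof (rule inj_onI)
      fix x y assume xy: "x \<in> A" "y \<in> A" "expand bs x = expand bs y"
      have lx: "length x = cnt bs" using xy(1) ly cb by (simp add: A_def tuples_def)
      have lyy: "length y = cnt bs" using xy(2) ly cb by (simp add: A_def tuples_def)
      have "x = compress (expand bs x)" using E2[OF lx] by simp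
      also have "\<dots> = compress (expand bs y)" using xy(3) by simp
      also have "\<dots> = y" using E2[OF lyy] by simp
      finally show "x = y" .
    qed
    have "zeta n m' (PPbarKbar_act m m' f \<Phi>) t = PPbarKbar_act m m' f \<Phi> (expand bs ys)"
      unfolding t zeta_def prod.case bs_def S_def using True by (rule if_P)
    also have "\<dots> = (\<Sum>w\<in>Fib m f (expand bs ys). \<Phi> w)"
      unfolding PPbarKbar_act_def by (rule lpushO_Fib)
    also have "Fib m f (expand bs ys) = expand bs ` A" unfolding A_def by (rule Fib_expand) (simp add: ly cb)
    also have "(\<Sum>w\<in>expand bs ` A. \<Phi> w) = (\<Sum>xs\<in>A. \<Phi> (expand bs xs))" by (rule sum.reindex_cong[OF inj refl refl])
    also have "\<dots> = (\<Sum>xs\<in>A. zeta n m \<Phi> (k, j, xs))"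
    proof (rule sum.cong[OF refl])
      fix xs assume "xs \<in> A"
      then have "length xs = Suc k" using ly by (simp add: A_def tuples_def)
      then have c: "k \<le> n \<and> j < n choose k \<and> length xs = Suc k" using kn jC by simp
      show "\<Phi> (expand bs xs) = zeta n m \<Phi> (k, j, xs)"
        unfolding zeta_def prod.case if_P[OF c] bs_def S_def ..
    qed
    finally show ?thesis unfolding R A_def .
  qed
qed

lemma iso2: "fa_isomorphic (PPbarKbar n :: (nat option list, 'k::field) fa_obj) PPbarKbar_act (DSum n) DSum_act"
  unfolding fa_isomorphic_def
proof (intro exI conjI allI)
  show "fa_nat (PPbarKbar n :: (nat option list, 'k::field) fa_obj) PPbarKbar_act (DSum n) DSum_act (zeta n)"
    unfolding fa_nat_def
  proof (intro conjI allI impI ballI)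
    fix m
    show "lin_on (PPbarKbar n m :: (nat option list \<Rightarrow> 'k) set) (zeta n m)" by (rule lin_zeta)
    show "zeta n m ` (PPbarKbar n m :: (nat option list \<Rightarrow> 'k) set) \<subseteq> DSum n m" using zeta_in by blast
  next
    fix m m' f and v :: "nat option list \<Rightarrow> 'k"
    show "zeta n m' (PPbarKbar_act m m' f v) = DSum_act m m' f (zeta n m v)" by (rule zeta_nat)
  qed
  fix m
  show "bij_betw (zeta n m) (PPbarKbar n m :: (nat option list \<Rightarrow> 'k) set) (DSum n m)"
  proof (rule bij_betw_byWitness[where f'="zinv n m"])
    show "\<forall>a\<in>PPbarKbar n m. zinv n m (zeta n m a) = (a :: nat option list \<Rightarrow> 'k)" using zinv_zeta by blast
    show "\<forall>a\<in>DSum n m. zeta n m (zinv n m a) = (a :: nat \<times> nat \<times> nat list \<Rightarrow> 'k)" using zeta_zinv by blast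
    show "zeta n m ` (PPbarKbar n m :: (nat option list \<Rightarrow> 'k) set) \<subseteq> DSum n m" using zeta_in by blast
    show "zinv n m ` (DSum n m :: (nat \<times> nat \<times> nat list \<Rightarrow> 'k) set) \<subseteq> PPbarKbar n m" using zinv_in by blast
  qed
qed


theorem mainTheorem3:
  fixes n :: nat
  shows "(\<forall>m. (PPbar n m :: (nat list \<Rightarrow> 'k::field) set) \<subseteq> PFA (Suc n) m)
    \<and> fa_module (PPbar n :: (nat list, 'k) fa_obj) PFA_act
    \<and> (\<exists>C :: (nat list, 'k) fa_obj. fa_module C PFA_act \<and>
         (\<forall>m. C m \<subseteq> PFA (Suc n) m \<and> PPbar n m \<inter> C m = {\<lambda>_. 0} \<and>
              {(\<lambda>xs. u xs + v xs) | u v. u \<in> PPbar n m \<and> v \<in> C m} = PFA (Suc n) m))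
    \<and> fa_projective TYPE('a) (PPbar n :: (nat list, 'k) fa_obj) PFA_act
    \<and> fa_isomorphic (PFA (Suc n) :: (nat list, 'k) fa_obj) PFA_act (PPbarKbar n) PPbarKbar_act
    \<and> fa_isomorphic (PPbarKbar n :: (nat option list, 'k) fa_obj) PPbarKbar_act (DSum n) DSum_act
    \<and> fa_isomorphic (PFA (Suc n) :: (nat list, 'k) fa_obj) PFA_act (DSum n) DSum_act"
proof (intro conjI)
  show "\<forall>m. (PPbar n m :: (nat list \<Rightarrow> 'k::field) set) \<subseteq> PFA (Suc n) m"
    by (auto simp: PPbar_def)
  show "fa_module (PPbar n :: (nat list, 'k) fa_obj) PFA_act" by (rule PPbar_module)
  show "\<exists>C :: (nat list, 'k) fa_obj. fa_module C PFA_act \<and>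
         (\<forall>m. C m \<subseteq> PFA (Suc n) m \<and> PPbar n m \<inter> C m = {\<lambda>_. 0} \<and>
              {(\<lambda>xs. u xs + v xs) | u v. u \<in> PPbar n m \<and> v \<in> C m} = PFA (Suc n) m)"
    by (rule exI[of _ "Cmp n"]) (simp add: Cmp_module Cmp_decomp)
  show "fa_projective TYPE('a) (PPbar n :: (nat list, 'k) fa_obj) PFA_act" by (rule PPbar_proj)
  show i1: "fa_isomorphic (PFA (Suc n) :: (nat list, 'k) fa_obj) PFA_act (PPbarKbar n) PPbarKbar_act"
    by (rule iso1)
  show i2: "fa_isomorphic (PPbarKbar n :: (nat option list, 'k) fa_obj) PPbarKbar_act (DSum n) DSum_act"
    by (rule iso2)
  show "fa_isomorphic (PFA (Suc n) :: (nat list, 'k) fa_obj) PFA_act (DSum n) DSum_act"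
    by (rule fa_iso_trans[OF i1 i2])
qed

end
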